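(* Let $\mathcal{H}$ be a finite-dimensional Hilbert space of dimension $D_{\mathcal{H}}$, let $f$, $\mathcal{F}$, $H$ be operators on $\mathcal{H}$, and for real $\beta,\tau$ set $\Phi=e^{-\tau\mathcal{F}}e^{-\beta H}/\mathrm{tr}(e^{-\tau\mathcal{F}}e^{-\beta H})$ (assuming the denominator is nonzero). Then for nonnegative integers $m_1,m_2$ with $m=m_1+m_2$, $$\frac{\partial^{m_2}}{\partial\beta^{m_2}}\frac{\partial^{m_1}}{\partial\tau^{m_1}}\mathrm{tr}(f\Phi)=(-1)^m\,\mathrm{tr}_{\mathcal{H}^{\otimes(m+1)}}\Big(f^{(0)}\mathcal{F}^{(1)}\cdots\mathcal{F}^{(m_1)}\,\Phi^{\otimes(m+1)}\,H^{(m_1+1)}H^{(m_1+2)}\cdots H^{(m)}\Big),$$ and consequently at $\beta=\tau=0$, $$\frac{\partial^{m_2}}{\partial\beta^{m_2}}\frac{\partial^{m_1}}{\partial\tau^{m_1}}\mathrm{tr}(f\Phi)\Big|_{\beta=\tau=0}=(-1)^m\big\langle\!\big\langle f^{(0)}\mathcal{F}^{(1)}\cdots\mathcal{F}^{(m_1)}H^{(m_1+1)}\cdots H^{(m)}\big\rangle\!\big\rangle_{m+1}.$$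
   Context: On $\mathcal{H}^{\otimes(m+1)}=\mathcal{H}_1\otimes\cdots\otimes\mathcal{H}_{m+1}$, $\langle\langle\cdot\rangle\rangle_{q}:=\mathrm{tr}_{\mathcal{H}^{\otimes q}}(\cdot)/\mathrm{tr}_{\mathcal{H}^{\otimes q}}(\hat1)$. For an operator $O$ on $\mathcal{H}$, $O_{\mathcal{H}_s}$ is $O$ acting on the $s$-th copy and identity elsewhere, $O^{(0)}=O_{\mathcal{H}_1}$, $O^{(s)}=O_{\mathcal{H}_1}+\cdots+O_{\mathcal{H}_s}-sO_{\mathcal{H}_{s+1}}$ for $s=1,\dots,m$. *)

theory Defs
  imports "HOL-Analysis.Derivative" "Jordan_Normal_Form.Matrix"
begin

text \<open>Operators on an n-dimensional Hilbert space are complex n x n matrices.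
 Operators on the q-fold tensor power are (n^q) x (n^q) matrices, with the
 tensor (Kronecker) product below (first factor = most significant index).\<close>

definition mtrace :: "complex mat \<Rightarrow> complex" where
  "mtrace A = (\<Sum>i<dim_row A. A $$ (i,i))"

definition kron :: "complex mat \<Rightarrow> complex mat \<Rightarrow> complex mat" where
  "kron A B = mat (dim_row A * dim_row B) (dim_col A * dim_col B)
     (\<lambda>(i,j). A $$ (i div dim_row B, j div dim_col B) * B $$ (i mod dim_row B, j mod dim_col B))"

fun tens_pow :: "nat \<Rightarrow> complex mat \<Rightarrow> complex mat" where
  "tens_pow 0 A = 1\<^sub>m 1"
| "tens_pow (Suc q) A = kron A (tens_pow q A)"

text \<open>O acting on the s-th copy (1-based, 1 \<le> s \<le> q) of H^{\<otimes> q}, identity elsewhere.\<close>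
definition op_on :: "nat \<Rightarrow> nat \<Rightarrow> nat \<Rightarrow> complex mat \<Rightarrow> complex mat" where
  "op_on n q s X = kron (1\<^sub>m (n ^ (s - 1))) (kron X (1\<^sub>m (n ^ (q - s))))"

definition op_sup :: "nat \<Rightarrow> nat \<Rightarrow> nat \<Rightarrow> complex mat \<Rightarrow> complex mat" where
  "op_sup n q s X = (if s = 0 then op_on n q 1 X else
     foldr (+) (map (\<lambda>r. op_on n q r X) [1..<s+1]) (0\<^sub>m (n ^ q) (n ^ q)) - of_nat s \<cdot>\<^sub>m op_on n q (s + 1) X)"

definition mat_prod_list :: "nat \<Rightarrow> complex mat list \<Rightarrow> complex mat" where
  "mat_prod_list N xs = foldr (*) xs (1\<^sub>m N)"

definition mexp :: "complex mat \<Rightarrow> complex mat" where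
  "mexp A = mat (dim_row A) (dim_col A)
     (\<lambda>(i,j). \<Sum>k. (A ^\<^sub>m k) $$ (i,j) / of_nat (fact k))"

definition ntr :: "nat \<Rightarrow> nat \<Rightarrow> complex mat \<Rightarrow> complex" where
  "ntr n q X = mtrace X / mtrace (1\<^sub>m (n ^ q) :: complex mat)"

fun nderiv :: "nat \<Rightarrow> (real \<Rightarrow> complex) \<Rightarrow> real \<Rightarrow> complex" where
  "nderiv 0 g = g"
| "nderiv (Suc k) g = (\<lambda>t. vector_derivative (nderiv k g) (at t))"

definition Phi :: "complex mat \<Rightarrow> complex mat \<Rightarrow> real \<Rightarrow> real \<Rightarrow> complex mat" where
  "Phi F H \<tau> \<beta> = (let M = mexp ((- complex_of_real \<tau>) \<cdot>\<^sub>m F) * mexp ((- complex_of_real \<beta>) \<cdot>\<^sub>m H)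
     in (1 / mtrace M) \<cdot>\<^sub>m M)"

definition op_string :: "nat \<Rightarrow> nat \<Rightarrow> nat \<Rightarrow> complex mat \<Rightarrow> complex mat \<Rightarrow> complex mat \<Rightarrow> complex mat list \<Rightarrow> complex mat" where
  "op_string n m1 m2 f F H mid = (let q = m1 + m2 + 1 in
     mat_prod_list (n ^ q)
       ([op_sup n q 0 f] @ map (\<lambda>s. op_sup n q s F) [1..<m1+1] @ mid
        @ map (\<lambda>s. op_sup n q s H) [m1+1..<m1+m2+1]))"

end

theory Submission
  imports Defs
begin


lemma mult_entry:
  assumes "A \<in> carrier_mat r k" "B \<in> carrier_mat k c" "i < r" "j < c"
  shows "(A * B) $$ (i,j) = (\<Sum>l<k. A $$ (i,l) * B $$ (l,j))"
  using assms by (auto simp: scalar_prod_def atLeast0LessThan intro!: sum.cong)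

lemma sum_div_mod:
  fixes g :: "nat \<Rightarrow> nat \<Rightarrow> 'a::comm_monoid_add"
  shows "(\<Sum>k<a*b. g (k div b) (k mod b)) = (\<Sum>k1<a. \<Sum>k2<b. g k1 k2)"
proof (induction a)
  case 0 then show ?case by simp
next
  case (Suc a)
  have "(\<Sum>k<Suc a*b. g (k div b) (k mod b)) = (\<Sum>k<a*b. g (k div b) (k mod b)) + (\<Sum>k\<in>{a*b..<a*b+b}. g (k div b) (k mod b))"
    by (simp add: lessThan_atLeast0 sum.atLeastLessThan_concat add.commute)
  also have "(\<Sum>k\<in>{a*b..<a*b+b}. g (k div b) (k mod b)) = (\<Sum>k2<b. g a k2)"
  proof -
    have "(\<Sum>k\<in>{a*b..<a*b+b}. g (k div b) (k mod b)) = (\<Sum>k2<b. g ((a*b+k2) div b) ((a*b+k2) mod b))"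
      by (simp add: sum.shift_bounds_nat_ivl[of _ 0 "a*b" b, simplified] lessThan_atLeast0 add.commute)
    also have "\<dots> = (\<Sum>k2<b. g a k2)"
      by (intro sum.cong) auto
    finally show ?thesis .
  qed
  finally show ?case using Suc by simp
qed

lemma mtrace_mult_eq:
  assumes "A \<in> carrier_mat r c" "B \<in> carrier_mat c r"
  shows "mtrace (A * B) = (\<Sum>i<r. \<Sum>l<c. A $$ (i,l) * B $$ (l,i))"
proof -
  have "mtrace (A * B) = (\<Sum>i<r. (A * B) $$ (i,i))" using assms by (simp add: mtrace_def)
  also have "\<dots> = (\<Sum>i<r. \<Sum>l<c. A $$ (i,l) * B $$ (l,i))"
    by (rule sum.cong[OF refl], rule mult_entry[OF assms], auto)
  finally show ?thesis .
qed

lemma mtrace_mult_comm: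
  assumes "A \<in> carrier_mat r c" "B \<in> carrier_mat c r"
  shows "mtrace (A * B) = mtrace (B * A)"
proof -
  have "mtrace (A * B) = (\<Sum>i<r. \<Sum>l<c. A $$ (i,l) * B $$ (l,i))"
    by (rule mtrace_mult_eq[OF assms])
  also have "\<dots> = (\<Sum>l<c. \<Sum>i<r. B $$ (l,i) * A $$ (i,l))"
    by (subst sum.swap) (simp add: mult.commute)
  also have "\<dots> = mtrace (B * A)"
    by (rule mtrace_mult_eq[OF assms(2,1), symmetric])
  finally show ?thesis .
qed

lemma kron_carrier[simp]: "kron A B \<in> carrier_mat (dim_row A * dim_row B) (dim_col A * dim_col B)"
  by (simp add: kron_def)

lemma kron_dims[simp]: "dim_row (kron A B) = dim_row A * dim_row B" "dim_col (kron A B) = dim_col A * dim_col B"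
  by (simp_all add: kron_def)

lemma kron_carrierI: "A \<in> carrier_mat a b \<Longrightarrow> B \<in> carrier_mat c d \<Longrightarrow> kron A B \<in> carrier_mat (a*c) (b*d)"
  unfolding kron_def carrier_mat_def by auto

lemma kron_index:
  "i < dim_row A * dim_row B \<Longrightarrow> j < dim_col A * dim_col B \<Longrightarrow>
   kron A B $$ (i,j) = A $$ (i div dim_row B, j div dim_col B) * B $$ (i mod dim_row B, j mod dim_col B)"
  by (simp add: kron_def)

lemma mtrace_kron:
  assumes "A \<in> carrier_mat a a" "B \<in> carrier_mat b b"
  shows "mtrace (kron A B) = mtrace A * mtrace B"
proof -
  have "mtrace (kron A B) = (\<Sum>k<a*b. A $$ (k div b, k div b) * B $$ (k mod b, k mod b))"
    using assms by (auto simp: mtrace_def kron_index intro!: sum.cong)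
  also have "\<dots> = (\<Sum>k1<a. \<Sum>k2<b. A $$ (k1,k1) * B $$ (k2,k2))"
    by (rule sum_div_mod[of "\<lambda>x y. A $$ (x,x) * B $$ (y,y)"])
  also have "\<dots> = mtrace A * mtrace B"
    using assms by (simp add: mtrace_def sum_product)
  finally show ?thesis .
qed

lemma div_mod_less:
  fixes i :: nat
  assumes "i < a * b"
  shows "i div b < a" "i mod b < b"
  using assms by (auto simp: less_mult_imp_div_less) (metis mod_less_divisor mult_0_right not_less0 not_gr0)

lemma kron_mult:
  assumes A: "A \<in> carrier_mat a1 a2" and B: "B \<in> carrier_mat b1 b2"
    and C: "C \<in> carrier_mat a2 a3" and D: "D \<in> carrier_mat b2 b3"
  shows "kron A B * kron C D = kron (A * C) (B * D)"
proof (rule eq_matI)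
  show "dim_row (kron A B * kron C D) = dim_row (kron (A * C) (B * D))" using assms by simp
  show "dim_col (kron A B * kron C D) = dim_col (kron (A * C) (B * D))" using assms by simp
  fix i j assume i: "i < dim_row (kron (A * C) (B * D))" and j: "j < dim_col (kron (A * C) (B * D))"
  have i': "i < a1 * b1" and j': "j < a3 * b3" using i j assms by auto
  have "(kron A B * kron C D) $$ (i,j) = (\<Sum>k<a2*b2. kron A B $$ (i,k) * kron C D $$ (k,j))"
    using i' j' assms by (intro mult_entry kron_carrierI) auto
  also have "\<dots> = (\<Sum>k<a2*b2. (A $$ (i div b1, k div b2) * C $$ (k div b2, j div b3)) * (B $$ (i mod b1, k mod b2) * D $$ (k mod b2, j mod b3)))"
    using i' j' assms by (intro sum.cong refl) (auto simp: kron_index div_mod_less)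
  also have "\<dots> = (\<Sum>k1<a2. \<Sum>k2<b2. (A $$ (i div b1, k1) * C $$ (k1, j div b3)) * (B $$ (i mod b1, k2) * D $$ (k2, j mod b3)))"
    by (rule sum_div_mod[of "\<lambda>x y. (A $$ (i div b1, x) * C $$ (x, j div b3)) * (B $$ (i mod b1, y) * D $$ (y, j mod b3))"])
  also have "\<dots> = (A * C) $$ (i div b1, j div b3) * (B * D) $$ (i mod b1, j mod b3)"
  proof -
    have "(A * C) $$ (i div b1, j div b3) = (\<Sum>k<a2. A $$ (i div b1, k) * C $$ (k, j div b3))"
      by (rule mult_entry[OF A C]) (use div_mod_less[OF i'] div_mod_less[OF j'] in auto)
    moreover have "(B * D) $$ (i mod b1, j mod b3) = (\<Sum>k<b2. B $$ (i mod b1, k) * D $$ (k, j mod b3))"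
      by (rule mult_entry[OF B D]) (use div_mod_less[OF i'] div_mod_less[OF j'] in auto)
    ultimately show ?thesis by (simp add: sum_product)
  qed
  also have "\<dots> = kron (A * C) (B * D) $$ (i,j)"
    using i' j' assms by (simp add: kron_index)
  finally show "(kron A B * kron C D) $$ (i,j) = kron (A * C) (B * D) $$ (i,j)" .
qed

lemma dm1: "(i::nat) div c div b = i div (b*c)"
  by (metis div_mult2_eq mult.commute)

lemma dm2: "0 < (c::nat) \<Longrightarrow> (i::nat) mod (b*c) div c = i div c mod b"
proof -
  assume c: "0 < c"
  have "i mod (b*c) = c*(i div c mod b) + i mod c" using mod_mult2_eq[of i c b] by (simp add: mult.commute)
  moreover have "(c*(i div c mod b) + i mod c) div c = i div c mod b" using c by simp
  ultimately show ?thesis by simp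
qed

lemma dm3: "(i::nat) mod (b*c) mod c = i mod c"
  by (simp add: mod_mod_cancel)

lemma kron_assoc:
  "kron (kron A B) C = kron A (kron B C)"
proof (rule eq_matI)
  fix i j assume i: "i < dim_row (kron A (kron B C))" and j: "j < dim_col (kron A (kron B C))"
  define b c b' c' where "b = dim_row B" "c = dim_row C" "b' = dim_col B" "c' = dim_col C"
  have i': "i < dim_row A * (b * c)" and j': "j < dim_col A * (b' * c')" using i j by (auto simp: b_c_b'_c'_def)
  have i2: "i < dim_row A * b * c" and j2: "j < dim_col A * b' * c'" using i' j' by (simp_all add: mult.assoc)
  have cp: "0 < c" "0 < c'" "0 < b" "0 < b'" using i' j' by (auto intro!: Nat.gr0I)
  have l1: "i div c < dim_row A * b" "j div c' < dim_col A * b'" using div_mod_less i2 j2 by auto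
  have l2: "i mod (b * c) < b * c" "j mod (b' * c') < b' * c'" using div_mod_less i' j' by auto
  have "kron (kron A B) C $$ (i,j) = kron A B $$ (i div c, j div c') * C $$ (i mod c, j mod c')"
    using i2 j2 by (subst kron_index) (auto simp: b_c_b'_c'_def)
  also have "\<dots> = A $$ (i div c div b, j div c' div b') * B $$ (i div c mod b, j div c' mod b') * C $$ (i mod c, j mod c')"
    using l1 by (subst kron_index) (auto simp: b_c_b'_c'_def)
  also have "\<dots> = A $$ (i div (b*c), j div (b'*c')) * (B $$ (i mod (b*c) div c, j mod (b'*c') div c') * C $$ (i mod (b*c) mod c, j mod (b'*c') mod c'))"
    using cp by (simp add: dm1 dm2 dm3 mult.assoc)
  also have "\<dots> = A $$ (i div (b*c), j div (b'*c')) * kron B C $$ (i mod (b*c), j mod (b'*c'))"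
    using l2 by (subst kron_index) (auto simp: b_c_b'_c'_def)
  also have "\<dots> = kron A (kron B C) $$ (i,j)"
    using i' j' by (subst kron_index) (auto simp: b_c_b'_c'_def)
  finally show "kron (kron A B) C $$ (i,j) = kron A (kron B C) $$ (i,j)" .
qed (auto simp: mult.assoc)


lemma kron_one_one: "kron (1\<^sub>m a) (1\<^sub>m b) = 1\<^sub>m (a*b)"
proof (rule eq_matI)
  fix i j assume i: "i < dim_row (1\<^sub>m (a*b) :: complex mat)" and j: "j < dim_col (1\<^sub>m (a*b) :: complex mat)"
  then have i': "i < a*b" and j': "j < a*b" by auto
  have "(i div b = j div b \<and> i mod b = j mod b) = (i = j)"
    by (metis div_mult_mod_eq)
  then show "kron (1\<^sub>m a) (1\<^sub>m b) $$ (i,j) = 1\<^sub>m (a*b) $$ (i,j)"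
    using i' j' div_mod_less[OF i'] div_mod_less[OF j'] by (auto simp: kron_index)
qed auto

lemma kron_one1_left[simp]: "kron (1\<^sub>m 1) A = A"
  by (rule eq_matI) (auto simp: kron_index)

lemma kron_one1_right[simp]: "kron A (1\<^sub>m 1) = A"
  by (rule eq_matI) (auto simp: kron_index)

lemma kron_add_left:
  assumes "A \<in> carrier_mat a b" "B \<in> carrier_mat a b"
  shows "kron (A + B) C = kron A C + kron B C"
proof (rule eq_matI)
  fix i j assume "i < dim_row (kron A C + kron B C)" "j < dim_col (kron A C + kron B C)"
  then have i: "i < a * dim_row C" and j: "j < b * dim_col C" using assms by auto
  show "kron (A + B) C $$ (i,j) = (kron A C + kron B C) $$ (i,j)"
    using assms i j div_mod_less[OF i] div_mod_less[OF j] by (simp add: kron_index algebra_simps)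
qed (use assms in auto)

lemma kron_add_right:
  assumes "A \<in> carrier_mat a b" "B \<in> carrier_mat a b"
  shows "kron C (A + B) = kron C A + kron C B"
proof (rule eq_matI)
  fix i j assume "i < dim_row (kron C A + kron C B)" "j < dim_col (kron C A + kron C B)"
  then have i: "i < dim_row C * a" and j: "j < dim_col C * b" using assms by auto
  show "kron C (A + B) $$ (i,j) = (kron C A + kron C B) $$ (i,j)"
    using assms i j div_mod_less[OF i] div_mod_less[OF j] by (simp add: kron_index algebra_simps)
qed (use assms in auto)

lemma kron_smult_left: "kron (c \<cdot>\<^sub>m A) B = c \<cdot>\<^sub>m kron A B"
  by (rule eq_matI) (auto simp: kron_index div_mod_less)

lemma kron_smult_right: "kron A (c \<cdot>\<^sub>m B) = c \<cdot>\<^sub>m kron A B"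
  by (rule eq_matI) (auto simp: kron_index div_mod_less)

lemma kron_diff_left:
  assumes "A \<in> carrier_mat a b" "B \<in> carrier_mat a b"
  shows "kron (A - B) C = kron A C - kron B C"
proof (rule eq_matI)
  fix i j assume "i < dim_row (kron A C - kron B C)" "j < dim_col (kron A C - kron B C)"
  then have i: "i < a * dim_row C" and j: "j < b * dim_col C" using assms by auto
  show "kron (A - B) C $$ (i,j) = (kron A C - kron B C) $$ (i,j)"
    using assms i j div_mod_less[OF i] div_mod_less[OF j] by (simp add: kron_index algebra_simps)
qed (use assms in auto)

lemma kron_zero_left: "kron (0\<^sub>m a b) C = 0\<^sub>m (a * dim_row C) (b * dim_col C)"
  by (rule eq_matI) (auto simp: kron_index div_mod_less)

lemma tens_pow_carrier: "A \<in> carrier_mat n n \<Longrightarrow> tens_pow q A \<in> carrier_mat (n^q) (n^q)"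
proof (induction q)
  case 0 then show ?case by simp
next
  case (Suc q)
  then have "kron A (tens_pow q A) \<in> carrier_mat (n * n^q) (n * n^q)" by (intro kron_carrierI)
  then show ?case by simp
qed

lemma kron_one1_left'[simp]: "kron (1\<^sub>m (Suc 0)) A = A"
  by (rule eq_matI) (auto simp: kron_index)

lemma kron_one1_right'[simp]: "kron A (1\<^sub>m (Suc 0)) = A"
  by (rule eq_matI) (auto simp: kron_index)

lemma tens_pow_Suc_right: "tens_pow (Suc q) A = kron (tens_pow q A) A"
proof (induction q)
  case 0 then show ?case by simp
next
  case (Suc q)
  have "tens_pow (Suc (Suc q)) A = kron A (kron (tens_pow q A) A)" using Suc by simp
  also have "\<dots> = kron (tens_pow (Suc q) A) A" by (simp add: kron_assoc)
  finally show ?case .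
qed

lemma op_on_carrier:
  assumes "X \<in> carrier_mat n n" "1 \<le> r" "r \<le> q"
  shows "op_on n q r X \<in> carrier_mat (n^q) (n^q)"
proof -
  have h: "(r-1) + (1 + (q-r)) = q" using assms by arith
  have "n^(r-1) * (n * n^(q-r)) = n^((r-1) + (1 + (q-r)))" by (simp only: power_add power_one_right)
  then have e: "n^(r-1) * (n * n^(q-r)) = n^q" using h by simp
  have "op_on n q r X \<in> carrier_mat (n^(r-1) * (n * n^(q-r))) (n^(r-1) * (n * n^(q-r)))"
    unfolding op_on_def using assms by (intro kron_carrierI) auto
  then show ?thesis by (simp only: e)
qed

lemma op_on_1: "op_on n q 1 X = kron X (1\<^sub>m (n^(q-1)))"
  by (simp add: op_on_def)

lemma op_on_last: "op_on n (Suc q) (Suc q) X = kron (1\<^sub>m (n^q)) X"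
  by (simp add: op_on_def)

lemma op_on_lift:
  assumes "1 \<le> r" "r \<le> q"
  shows "kron (op_on n q r X) (1\<^sub>m (n^j)) = op_on n (q+j) r X"
proof -
  have "n^(q-r) * n^j = n^(q+j-r)" using assms by (simp add: power_add[symmetric])
  then show ?thesis
    by (simp add: op_on_def kron_assoc kron_one_one)
qed


definition msum :: "nat \<Rightarrow> complex mat list \<Rightarrow> complex mat" where
  "msum N xs = foldr (+) xs (0\<^sub>m N N)"

lemma msum_carrier: "set xs \<subseteq> carrier_mat N N \<Longrightarrow> msum N xs \<in> carrier_mat N N"
  unfolding msum_def by (induction xs) auto

lemma foldr_add_shift:
  "set xs \<subseteq> carrier_mat N N \<Longrightarrow> B \<in> carrier_mat N N \<Longrightarrow> foldr (+) xs B = msum N xs + B"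
proof (induction xs)
  case Nil then show ?case by (simp add: msum_def)
next
  case (Cons x xs)
  then have "foldr (+) (x # xs) B = x + (msum N xs + B)" by simp
  also have "\<dots> = (x + msum N xs) + B"
    using Cons.prems by (subst assoc_add_mat[symmetric]) (auto intro: msum_carrier)
  finally show ?case by (simp add: msum_def)
qed

lemma msum_append1:
  "set xs \<subseteq> carrier_mat N N \<Longrightarrow> y \<in> carrier_mat N N \<Longrightarrow> msum N (xs @ [y]) = msum N xs + y"
  unfolding msum_def[of N "xs @ [y]"] by (simp add: foldr_add_shift)

lemma kron_msum_left:
  assumes "set xs \<subseteq> carrier_mat N N" "C \<in> carrier_mat m m"
  shows "kron (msum N xs) C = msum (N*m) (map (\<lambda>x. kron x C) xs)"
  using assms(1)
proof (induction xs)
  case Nil then show ?case using assms(2) by (simp add: msum_def kron_zero_left)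
next
  case (Cons x xs)
  then have "kron (msum N (x # xs)) C = kron x C + kron (msum N xs) C"
    by (simp add: msum_def[of N "x # xs"] msum_def[of N xs, symmetric] kron_add_left[OF _ msum_carrier])
  then show ?case using Cons by (simp add: msum_def)
qed



definition gsum :: "nat \<Rightarrow> nat \<Rightarrow> complex mat \<Rightarrow> complex mat" where
  "gsum n q X = msum (n^q) (map (\<lambda>r. op_on n q r X) [1..<Suc q])"

lemma gsum_carrier: "X \<in> carrier_mat n n \<Longrightarrow> gsum n q X \<in> carrier_mat (n^q) (n^q)"
  unfolding gsum_def by (rule msum_carrier) (auto intro!: op_on_carrier)

lemma map_op_on_lift:
  assumes "X \<in> carrier_mat n n" "s \<le> p"
  shows "kron (msum (n^p) (map (\<lambda>r. op_on n p r X) [1..<Suc s])) (1\<^sub>m (n^j))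
       = msum (n^(p+j)) (map (\<lambda>r. op_on n (p+j) r X) [1..<Suc s])"
proof -
  have "kron (msum (n^p) (map (\<lambda>r. op_on n p r X) [1..<Suc s])) (1\<^sub>m (n^j))
      = msum (n^p * n^j) (map (\<lambda>x. kron x (1\<^sub>m (n^j))) (map (\<lambda>r. op_on n p r X) [1..<Suc s]))"
    using assms by (intro kron_msum_left) (auto intro!: op_on_carrier)
  also have "map (\<lambda>x. kron x (1\<^sub>m (n^j))) (map (\<lambda>r. op_on n p r X) [1..<Suc s])
     = map (\<lambda>r. op_on n (p+j) r X) [1..<Suc s]"
    using assms by (auto simp: op_on_lift)
  finally show ?thesis by (simp add: power_add)
qed

lemma gsum_Suc:
  assumes "X \<in> carrier_mat n n"
  shows "gsum n (Suc q) X = kron (gsum n q X) (1\<^sub>m n) + kron (1\<^sub>m (n^q)) X"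
proof -
  have "gsum n (Suc q) X = msum (n^Suc q) (map (\<lambda>r. op_on n (Suc q) r X) [1..<Suc q] @ [op_on n (Suc q) (Suc q) X])"
    by (simp add: gsum_def)
  also have "\<dots> = msum (n^Suc q) (map (\<lambda>r. op_on n (Suc q) r X) [1..<Suc q]) + op_on n (Suc q) (Suc q) X"
  proof -
    have c: "\<And>r. 1 \<le> r \<Longrightarrow> r \<le> Suc q \<Longrightarrow> op_on n (Suc q) r X \<in> carrier_mat (n^Suc q) (n^Suc q)"
      using op_on_carrier[OF assms] by blast
    show ?thesis by (intro msum_append1) (use c in auto)
  qed
  also have "msum (n^Suc q) (map (\<lambda>r. op_on n (Suc q) r X) [1..<Suc q]) = kron (gsum n q X) (1\<^sub>m n)"
    using map_op_on_lift[OF assms, of q q 1] by (simp add: gsum_def)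
  finally show ?thesis by (simp add: op_on_last)
qed

lemma op_sup_Suc:
  assumes "X \<in> carrier_mat n n" "1 \<le> q"
  shows "op_sup n (Suc q) q X = kron (gsum n q X) (1\<^sub>m n) - of_nat q \<cdot>\<^sub>m kron (1\<^sub>m (n^q)) X"
proof -
  have "op_sup n (Suc q) q X = msum (n^Suc q) (map (\<lambda>r. op_on n (Suc q) r X) [1..<Suc q]) - of_nat q \<cdot>\<^sub>m op_on n (Suc q) (Suc q) X"
    using assms by (simp add: op_sup_def msum_def)
  also have "msum (n^Suc q) (map (\<lambda>r. op_on n (Suc q) r X) [1..<Suc q]) = kron (gsum n q X) (1\<^sub>m n)"
    using map_op_on_lift[OF assms(1), of q q 1] by (simp add: gsum_def)
  finally show ?thesis by (simp add: op_on_last)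
qed

lemma op_sup_carrier:
  assumes "X \<in> carrier_mat n n" "s < q"
  shows "op_sup n q s X \<in> carrier_mat (n^q) (n^q)"
proof (cases "s = 0")
  case True then show ?thesis using assms by (simp add: op_sup_def op_on_carrier)
next
  case False
  have "msum (n^q) (map (\<lambda>r. op_on n q r X) [1..<Suc s]) \<in> carrier_mat (n^q) (n^q)"
    using assms by (intro msum_carrier) (auto intro!: op_on_carrier)
  moreover have "op_on n q (Suc s) X \<in> carrier_mat (n^q) (n^q)"
    using assms by (intro op_on_carrier) auto
  moreover have "op_sup n q s X = msum (n^q) (map (\<lambda>r. op_on n q r X) [1..<Suc s]) - of_nat s \<cdot>\<^sub>m op_on n q (Suc s) X"
    using False by (simp add: op_sup_def msum_def)
  ultimately show ?thesis by (metis minus_carrier_mat smult_carrier_mat)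
qed

lemma op_sup_lift:
  assumes "X \<in> carrier_mat n n" "s < p"
  shows "kron (op_sup n p s X) (1\<^sub>m (n^j)) = op_sup n (p+j) s X"
proof (cases "s = 0")
  case True then show ?thesis using assms by (simp add: op_sup_def op_on_lift)
next
  case False
  have c1: "msum (n^p) (map (\<lambda>r. op_on n p r X) [1..<Suc s]) \<in> carrier_mat (n^p) (n^p)"
    using assms by (intro msum_carrier) (auto intro!: op_on_carrier)
  have c2: "of_nat s \<cdot>\<^sub>m op_on n p (Suc s) X \<in> carrier_mat (n^p) (n^p)"
    using assms by (intro smult_carrier_mat op_on_carrier) auto
  have "kron (op_sup n p s X) (1\<^sub>m (n^j)) = kron (msum (n^p) (map (\<lambda>r. op_on n p r X) [1..<Suc s])) (1\<^sub>m (n^j))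
        - kron (of_nat s \<cdot>\<^sub>m op_on n p (Suc s) X) (1\<^sub>m (n^j))"
  proof -
    have eq: "op_sup n p s X = msum (n^p) (map (\<lambda>r. op_on n p r X) [1..<Suc s]) - of_nat s \<cdot>\<^sub>m op_on n p (Suc s) X"
      using False by (simp add: op_sup_def msum_def)
    show ?thesis by (simp only: eq kron_diff_left[OF c1 c2])
  qed
  also have "\<dots> = op_sup n (p+j) s X"
  proof -
    have eq2: "op_sup n (p+j) s X = msum (n^(p+j)) (map (\<lambda>r. op_on n (p+j) r X) [1..<Suc s]) - of_nat s \<cdot>\<^sub>m op_on n (p+j) (Suc s) X"
      using False by (simp add: op_sup_def msum_def)
    have l1: "kron (msum (n^p) (map (\<lambda>r. op_on n p r X) [1..<Suc s])) (1\<^sub>m (n^j)) = msum (n^(p+j)) (map (\<lambda>r. op_on n (p+j) r X) [1..<Suc s])"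
      using assms by (intro map_op_on_lift) auto
    have l2: "kron (op_on n p (Suc s) X) (1\<^sub>m (n^j)) = op_on n (p+j) (Suc s) X"
      using assms by (intro op_on_lift) auto
    show ?thesis by (simp only: eq2 l1 l2 kron_smult_left)
  qed
  finally show ?thesis .
qed

lemma kron_comm:
  assumes "A \<in> carrier_mat a a" "C \<in> carrier_mat a a" "B \<in> carrier_mat b b" "D \<in> carrier_mat b b"
    "A * C = C * A" "B * D = D * B"
  shows "kron A B * kron C D = kron C D * kron A B"
  using assms by (simp add: kron_mult)

lemma op_on_comm_lt:
  assumes X: "X \<in> carrier_mat n n" and Y: "Y \<in> carrier_mat n n" and r: "1 \<le> r" "r < r'" "r' \<le> q"
  shows "op_on n q r X * op_on n q r' Y = op_on n q r' Y * op_on n q r X"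
proof -
  define a c d where "a = n^(r-1)" "c = n^(r'-r-1)" "d = n^(q-r')"
  have h1: "q - r = (r'-r-1) + (1 + (q-r'))" using r by arith
  have h2: "r' - 1 = (r-1) + (1 + (r'-r-1))" using r by arith
  have e1: "n^(q-r) = c * (n * d)"
    unfolding a_c_d_def by (subst h1, simp only: power_add power_one_right)
  have e2: "n^(r'-1) = a * (n * c)"
    unfolding a_c_d_def by (subst h2, simp only: power_add power_one_right)
  have o1: "op_on n q r X = kron (1\<^sub>m a) (kron X (kron (1\<^sub>m c) (kron (1\<^sub>m n) (1\<^sub>m d))))"
    unfolding op_on_def e1 by (simp add: kron_one_one a_c_d_def)
  have o2: "op_on n q r' Y = kron (1\<^sub>m a) (kron (1\<^sub>m n) (kron (1\<^sub>m c) (kron Y (1\<^sub>m d))))"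
    unfolding op_on_def e2 by (simp add: kron_one_one[symmetric] kron_assoc a_c_d_def)
  show ?thesis unfolding o1 o2
    using X Y by (intro kron_comm kron_carrierI) auto
qed

lemma op_on_comm:
  assumes X: "X \<in> carrier_mat n n" and Y: "Y \<in> carrier_mat n n" and r: "1 \<le> r" "r \<le> q" "1 \<le> r'" "r' \<le> q"
  shows "op_on n q r X * op_on n q r' X = op_on n q r' X * op_on n q r X"
  using op_on_comm_lt[OF X X, of r r' q] op_on_comm_lt[OF X X, of r' r q] r
  by (cases r r' rule: linorder_cases) auto


definition mhd :: "nat \<Rightarrow> nat \<Rightarrow> (real \<Rightarrow> complex mat) \<Rightarrow> complex mat \<Rightarrow> real \<Rightarrow> bool" where
  "mhd r c P P' t \<longleftrightarrow> (\<forall>s. P s \<in> carrier_mat r c) \<and> P' \<in> carrier_mat r c \<and>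
     (\<forall>i<r. \<forall>j<c. ((\<lambda>s. P s $$ (i,j)) has_vector_derivative P' $$ (i,j)) (at t))"

lemma mhdD:
  assumes "mhd r c P P' t"
  shows "\<And>s. P s \<in> carrier_mat r c" "P' \<in> carrier_mat r c"
    "\<And>i j. i < r \<Longrightarrow> j < c \<Longrightarrow> ((\<lambda>s. P s $$ (i,j)) has_vector_derivative P' $$ (i,j)) (at t)"
  using assms unfolding mhd_def by auto

lemma mhd_const: "A \<in> carrier_mat r c \<Longrightarrow> mhd r c (\<lambda>s. A) (0\<^sub>m r c) t"
  unfolding mhd_def by auto

lemma mhd_mult:
  assumes P: "mhd r k P P' t" and Q: "mhd k c Q Q' t"
  shows "mhd r c (\<lambda>s. P s * Q s) (P t * Q' + P' * Q t) t"
proof -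
  note cP = mhdD(1,2)[OF P] and cQ = mhdD(1,2)[OF Q]
  note dims = carrier_matD[OF cP(1)] carrier_matD[OF cP(2)] carrier_matD[OF cQ(1)] carrier_matD[OF cQ(2)]
  show ?thesis unfolding mhd_def
  proof (intro conjI allI impI)
    show "P s * Q s \<in> carrier_mat r c" for s using cP cQ by (meson mult_carrier_mat)
    show "P t * Q' + P' * Q t \<in> carrier_mat r c" using cP cQ by (meson add_carrier_mat mult_carrier_mat)
    fix i j assume i: "i < r" and j: "j < c"
    have e: "(\<lambda>s. (P s * Q s) $$ (i,j)) = (\<lambda>s. \<Sum>l<k. P s $$ (i,l) * Q s $$ (l,j))"
      using mult_entry[OF cP(1) cQ(1) i j] by auto
    have d: "((\<lambda>s. \<Sum>l<k. P s $$ (i,l) * Q s $$ (l,j)) has_vector_derivative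
        (\<Sum>l<k. P t $$ (i,l) * Q' $$ (l,j) + P' $$ (i,l) * Q t $$ (l,j))) (at t)"
      using i j by (intro has_vector_derivative_sum has_vector_derivative_mult mhdD(3)[OF P] mhdD(3)[OF Q]) auto
    have "(P t * Q' + P' * Q t) $$ (i,j) = (P t * Q') $$ (i,j) + (P' * Q t) $$ (i,j)"
      using i j dims by (subst index_add_mat) auto
    also have "\<dots> = (\<Sum>l<k. P t $$ (i,l) * Q' $$ (l,j)) + (\<Sum>l<k. P' $$ (i,l) * Q t $$ (l,j))"
      by (simp only: mult_entry[OF cP(1) cQ(2) i j] mult_entry[OF cP(2) cQ(1) i j])
    also have "\<dots> = (\<Sum>l<k. P t $$ (i,l) * Q' $$ (l,j) + P' $$ (i,l) * Q t $$ (l,j))"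
      by (simp add: sum.distrib)
    finally show "((\<lambda>s. (P s * Q s) $$ (i,j)) has_vector_derivative (P t * Q' + P' * Q t) $$ (i,j)) (at t)"
      using d e by simp
  qed
qed

lemma mhd_smult:
  assumes f: "(f has_vector_derivative f') (at t)" and P: "mhd r c P P' t"
  shows "mhd r c (\<lambda>s. f s \<cdot>\<^sub>m P s) (f t \<cdot>\<^sub>m P' + f' \<cdot>\<^sub>m P t) t"
proof -
  note cP = mhdD(1,2)[OF P]
  note dims = carrier_matD[OF cP(1)] carrier_matD[OF cP(2)]
  show ?thesis unfolding mhd_def
  proof (intro conjI allI impI)
    show "f s \<cdot>\<^sub>m P s \<in> carrier_mat r c" for s using cP by simp
    show "f t \<cdot>\<^sub>m P' + f' \<cdot>\<^sub>m P t \<in> carrier_mat r c" using cP by (meson add_carrier_mat smult_carrier_mat)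
    fix i j assume i: "i < r" and j: "j < c"
    have "((\<lambda>s. f s * P s $$ (i,j)) has_vector_derivative f t * P' $$ (i,j) + f' * P t $$ (i,j)) (at t)"
      using i j by (intro has_vector_derivative_mult f mhdD(3)[OF P])
    moreover have "(f t \<cdot>\<^sub>m P' + f' \<cdot>\<^sub>m P t) $$ (i,j) = f t * P' $$ (i,j) + f' * P t $$ (i,j)"
      using i j dims by (subst index_add_mat) auto
    moreover have "(\<lambda>s. (f s \<cdot>\<^sub>m P s) $$ (i,j)) = (\<lambda>s. f s * P s $$ (i,j))"
      using i j dims by auto
    ultimately show "((\<lambda>s. (f s \<cdot>\<^sub>m P s) $$ (i,j)) has_vector_derivative (f t \<cdot>\<^sub>m P' + f' \<cdot>\<^sub>m P t) $$ (i,j)) (at t)"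
      by simp
  qed
qed

lemma mhd_kron:
  assumes P: "mhd r1 c1 P P' t" and Q: "mhd r2 c2 Q Q' t"
  shows "mhd (r1*r2) (c1*c2) (\<lambda>s. kron (P s) (Q s)) (kron (P t) Q' + kron P' (Q t)) t"
proof -
  note cP = mhdD(1,2)[OF P] and cQ = mhdD(1,2)[OF Q]
  note dims = carrier_matD[OF cP(1)] carrier_matD[OF cP(2)] carrier_matD[OF cQ(1)] carrier_matD[OF cQ(2)]
  show ?thesis unfolding mhd_def
  proof (intro conjI allI impI)
    show "kron (P s) (Q s) \<in> carrier_mat (r1*r2) (c1*c2)" for s using cP cQ by (meson kron_carrierI)
    show "kron (P t) Q' + kron P' (Q t) \<in> carrier_mat (r1*r2) (c1*c2)" using cP cQ by (meson add_carrier_mat kron_carrierI)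
    fix i j assume i: "i < r1*r2" and j: "j < c1*c2"
    note l = div_mod_less[OF i] div_mod_less[OF j]
    have e: "(\<lambda>s. kron (P s) (Q s) $$ (i,j)) = (\<lambda>s. P s $$ (i div r2, j div c2) * Q s $$ (i mod r2, j mod c2))"
      using dims i j by (auto simp: kron_index)
    have d: "((\<lambda>s. P s $$ (i div r2, j div c2) * Q s $$ (i mod r2, j mod c2)) has_vector_derivative
       P t $$ (i div r2, j div c2) * Q' $$ (i mod r2, j mod c2) + P' $$ (i div r2, j div c2) * Q t $$ (i mod r2, j mod c2)) (at t)"
      using l by (intro has_vector_derivative_mult mhdD(3)[OF P] mhdD(3)[OF Q]) auto
    have "(kron (P t) Q' + kron P' (Q t)) $$ (i,j) = P t $$ (i div r2, j div c2) * Q' $$ (i mod r2, j mod c2) + P' $$ (i div r2, j div c2) * Q t $$ (i mod r2, j mod c2)"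
      using dims i j by (simp add: kron_index)
    then show "((\<lambda>s. kron (P s) (Q s) $$ (i,j)) has_vector_derivative (kron (P t) Q' + kron P' (Q t)) $$ (i,j)) (at t)"
      using d e by simp
  qed
qed

lemma mhd_trace:
  assumes P: "mhd r r P P' t"
  shows "((\<lambda>s. mtrace (P s)) has_vector_derivative mtrace P') (at t)"
proof -
  note cP = mhdD(1,2)[OF P]
  note dims = carrier_matD[OF cP(1)] carrier_matD[OF cP(2)]
  have e: "(\<lambda>s. mtrace (P s)) = (\<lambda>s. \<Sum>i<r. P s $$ (i,i))" using dims by (auto simp: mtrace_def)
  show ?thesis unfolding e using cP
    by (auto simp: mtrace_def intro!: has_vector_derivative_sum mhdD(3)[OF P])
qed

lemma pow_smult_entry:
  fixes A :: "complex mat" and z :: complex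
  assumes "A \<in> carrier_mat n n" "i < n" "j < n"
  shows "((z \<cdot>\<^sub>m A) ^\<^sub>m k) $$ (i,j) = z^k * (A ^\<^sub>m k) $$ (i,j)"
  using assms(2,3)
proof (induction k arbitrary: j)
  case 0 then show ?case using assms by auto
next
  case (Suc k)
  have c1: "(z \<cdot>\<^sub>m A) ^\<^sub>m k \<in> carrier_mat n n" "z \<cdot>\<^sub>m A \<in> carrier_mat n n" using assms by auto
  have "((z \<cdot>\<^sub>m A) ^\<^sub>m Suc k) $$ (i,j) = (\<Sum>l<n. ((z \<cdot>\<^sub>m A) ^\<^sub>m k) $$ (i,l) * (z \<cdot>\<^sub>m A) $$ (l,j))"
    using mult_entry[OF c1 Suc.prems] by simp
  also have "\<dots> = (\<Sum>l<n. z^Suc k * ((A ^\<^sub>m k) $$ (i,l) * A $$ (l,j)))"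
    using Suc assms by (intro sum.cong refl) (auto simp: mult_ac)
  also have "\<dots> = z^Suc k * (A ^\<^sub>m Suc k) $$ (i,j)"
    using mult_entry[OF pow_carrier_mat[OF assms(1)] assms(1) Suc.prems, of k] by (simp add: sum_distrib_left)
  finally show ?case .
qed

definition mnorm :: "complex mat \<Rightarrow> nat \<Rightarrow> real" where
  "mnorm A n = (\<Sum>i<n. \<Sum>j<n. norm (A $$ (i,j)))"

lemma pow_entry_bound:
  assumes A: "A \<in> carrier_mat n n" and ij: "i < n" "j < n"
  shows "norm ((A ^\<^sub>m k) $$ (i,j)) \<le> mnorm A n ^ k"
  using ij
proof (induction k arbitrary: j)
  case 0 then show ?case using A by auto
next
  case (Suc k)
  have N0: "0 \<le> mnorm A n" unfolding mnorm_def by (intro sum_nonneg) auto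
  have col: "(\<Sum>l<n. norm (A $$ (l,j))) \<le> mnorm A n"
  proof -
    have "(\<Sum>l<n. norm (A $$ (l,j))) \<le> (\<Sum>l<n. \<Sum>j'<n. norm (A $$ (l,j')))"
      using Suc.prems by (intro sum_mono member_le_sum) auto
    then show ?thesis by (simp add: mnorm_def)
  qed
  have "norm ((A ^\<^sub>m Suc k) $$ (i,j)) = norm (\<Sum>l<n. (A ^\<^sub>m k) $$ (i,l) * A $$ (l,j))"
    using mult_entry[OF pow_carrier_mat[OF A] A Suc.prems, of k] by simp
  also have "\<dots> \<le> (\<Sum>l<n. norm ((A ^\<^sub>m k) $$ (i,l)) * norm (A $$ (l,j)))"
    by (rule order_trans[OF norm_sum]) (simp add: norm_mult)
  also have "\<dots> \<le> (\<Sum>l<n. mnorm A n ^ k * norm (A $$ (l,j)))"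
    using Suc by (intro sum_mono mult_right_mono) auto
  also have "\<dots> = mnorm A n ^ k * (\<Sum>l<n. norm (A $$ (l,j)))"
    by (simp add: sum_distrib_left)
  also have "\<dots> \<le> mnorm A n ^ k * mnorm A n"
    using col N0 by (intro mult_left_mono) auto
  finally show ?case by (simp add: mult.commute)
qed

definition ser :: "complex mat \<Rightarrow> nat \<Rightarrow> nat \<Rightarrow> complex \<Rightarrow> complex" where
  "ser A i j z = (\<Sum>k. (A ^\<^sub>m k) $$ (i,j) / of_nat (fact k) * z^k)"

lemma ser_summable:
  fixes A :: "complex mat" and z :: complex
  assumes A: "A \<in> carrier_mat n n" and ij: "i < n" "j < n"
  shows "summable (\<lambda>k. (A ^\<^sub>m k) $$ (i,j) / of_nat (fact k) * z^k)"
proof -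
  have g: "summable (\<lambda>k. inverse (fact k) * (mnorm A n * norm z)^k :: real)" by (rule summable_exp)
  have b: "norm ((A ^\<^sub>m k) $$ (i,j) / of_nat (fact k) * z^k) \<le> inverse (fact k) * (mnorm A n * norm z)^k" for k
  proof -
    have "norm ((A ^\<^sub>m k) $$ (i,j) / of_nat (fact k) * z^k) = norm ((A ^\<^sub>m k) $$ (i,j)) / fact k * norm z ^ k"
      by (simp add: norm_mult norm_divide norm_power)
    also have "\<dots> \<le> mnorm A n ^ k / fact k * norm z ^ k"
      using pow_entry_bound[OF A ij, of k] by (intro mult_right_mono divide_right_mono) auto
    also have "\<dots> = inverse (fact k) * (mnorm A n * norm z)^k"
      by (simp add: power_mult_distrib field_simps)
    finally show ?thesis .
  qed
  show ?thesis by (rule summable_comparison_test'[OF g b])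
qed

lemma mexp_entry:
  assumes A: "A \<in> carrier_mat n n" and ij: "i < n" "j < n"
  shows "mexp (z \<cdot>\<^sub>m A) $$ (i,j) = ser A i j z"
  using assms by (simp add: mexp_def ser_def pow_smult_entry mult.commute)

lemma mexp_carrier: "A \<in> carrier_mat n n \<Longrightarrow> mexp (z \<cdot>\<^sub>m A) \<in> carrier_mat n n"
  unfolding mexp_def carrier_mat_def by auto




lemma mexp_dims[simp]: "dim_row (mexp A) = dim_row A" "dim_col (mexp A) = dim_col A"
  by (simp_all add: mexp_def)

lemma pow_Suc_left:
  assumes "A \<in> carrier_mat n n"
  shows "A ^\<^sub>m Suc k = A * A ^\<^sub>m k"
proof (induction k)
  case 0 then show ?case using assms by simp
next
  case (Suc k)
  have "A ^\<^sub>m Suc (Suc k) = (A * A ^\<^sub>m k) * A" using Suc by simp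
  also have "\<dots> = A * (A ^\<^sub>m k * A)" using assms by (intro assoc_mult_mat) auto
  finally show ?case by simp
qed

lemma ser_mult_right:
  assumes A: "A \<in> carrier_mat n n" and B: "B \<in> carrier_mat n n" and ij: "i < n" "j < n"
  shows "(\<Sum>l<n. ser A i l z * B $$ (l,j)) = (\<Sum>k. (A ^\<^sub>m k * B) $$ (i,j) / of_nat (fact k) * z^k)"
proof -
  have "(\<Sum>l<n. ser A i l z * B $$ (l,j)) = (\<Sum>l<n. \<Sum>k. (A ^\<^sub>m k) $$ (i,l) / of_nat (fact k) * z^k * B $$ (l,j))"
    unfolding ser_def using ser_summable[OF A ij(1)] by (intro sum.cong refl suminf_mult2) auto
  also have "\<dots> = (\<Sum>k. \<Sum>l<n. (A ^\<^sub>m k) $$ (i,l) / of_nat (fact k) * z^k * B $$ (l,j))"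
    using ser_summable[OF A ij(1)] by (intro suminf_sum[symmetric] summable_mult2) auto
  also have "\<dots> = (\<Sum>k. (A ^\<^sub>m k * B) $$ (i,j) / of_nat (fact k) * z^k)"
  proof (rule suminf_cong)
    fix k
    have "(A ^\<^sub>m k * B) $$ (i,j) = (\<Sum>l<n. (A ^\<^sub>m k) $$ (i,l) * B $$ (l,j))"
      by (rule mult_entry[OF pow_carrier_mat[OF A] B ij])
    then show "(\<Sum>l<n. (A ^\<^sub>m k) $$ (i,l) / of_nat (fact k) * z^k * B $$ (l,j)) = (A ^\<^sub>m k * B) $$ (i,j) / of_nat (fact k) * z^k"
      by (simp add: divide_inverse sum_distrib_left sum_distrib_right mult_ac)
  qed
  finally show ?thesis .
qed

lemma ser_mult_left:
  assumes A: "A \<in> carrier_mat n n" and B: "B \<in> carrier_mat n n" and ij: "i < n" "j < n"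
  shows "(\<Sum>l<n. B $$ (i,l) * ser A l j z) = (\<Sum>k. (B * A ^\<^sub>m k) $$ (i,j) / of_nat (fact k) * z^k)"
proof -
  have "(\<Sum>l<n. B $$ (i,l) * ser A l j z) = (\<Sum>l<n. \<Sum>k. B $$ (i,l) * ((A ^\<^sub>m k) $$ (l,j) / of_nat (fact k) * z^k))"
    unfolding ser_def using ser_summable[OF A _ ij(2)] by (intro sum.cong refl suminf_mult[symmetric]) auto
  also have "\<dots> = (\<Sum>k. \<Sum>l<n. B $$ (i,l) * ((A ^\<^sub>m k) $$ (l,j) / of_nat (fact k) * z^k))"
    using ser_summable[OF A _ ij(2)] by (intro suminf_sum[symmetric] summable_mult) auto
  also have "\<dots> = (\<Sum>k. (B * A ^\<^sub>m k) $$ (i,j) / of_nat (fact k) * z^k)"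
  proof (rule suminf_cong)
    fix k
    have "(B * A ^\<^sub>m k) $$ (i,j) = (\<Sum>l<n. B $$ (i,l) * (A ^\<^sub>m k) $$ (l,j))"
      by (rule mult_entry[OF B pow_carrier_mat[OF A] ij])
    then show "(\<Sum>l<n. B $$ (i,l) * ((A ^\<^sub>m k) $$ (l,j) / of_nat (fact k) * z^k)) = (B * A ^\<^sub>m k) $$ (i,j) / of_nat (fact k) * z^k"
      by (simp add: divide_inverse sum_distrib_left sum_distrib_right mult_ac)
  qed
  finally show ?thesis .
qed

lemma ser_deriv:
  assumes A: "A \<in> carrier_mat n n" and ij: "i < n" "j < n"
  shows "(ser A i j has_field_derivative (\<Sum>k. (A ^\<^sub>m Suc k) $$ (i,j) / of_nat (fact k) * z^k)) (at z)"
proof -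
  have "((\<lambda>z. \<Sum>k. (A ^\<^sub>m k) $$ (i,j) / of_nat (fact k) * z^k) has_field_derivative
     (\<Sum>k. diffs (\<lambda>k. (A ^\<^sub>m k) $$ (i,j) / of_nat (fact k)) k * z^k)) (at z)"
    by (rule termdiffs_strong_converges_everywhere) (rule ser_summable[OF A ij])
  moreover have "diffs (\<lambda>k. (A ^\<^sub>m k) $$ (i,j) / of_nat (fact k)) k = (A ^\<^sub>m Suc k) $$ (i,j) / of_nat (fact k)" for k
  proof -
    have aux: "(x::complex) \<noteq> 0 \<Longrightarrow> x * (a / (x * F)) = a / F" for x a F
      by (cases "F = 0") (simp_all add: field_simps)
    have "(of_nat (fact (Suc k)) :: complex) = of_nat (Suc k) * of_nat (fact k)" by (simp add: algebra_simps)
    then show ?thesis unfolding diffs_def using aux[of "of_nat (Suc k)" "(A ^\<^sub>m Suc k) $$ (i,j)" "of_nat (fact k)"]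
      by (simp del: pow_mat.simps of_nat_Suc)
  qed
  ultimately show ?thesis by (simp add: ser_def[abs_def] del: pow_mat.simps)
qed

lemma mexp_deriv_complex:
  assumes A: "A \<in> carrier_mat n n" and ij: "i < n" "j < n"
  shows "(ser A i j has_field_derivative (mexp (z \<cdot>\<^sub>m A) * A) $$ (i,j)) (at z)"
    "(ser A i j has_field_derivative (A * mexp (z \<cdot>\<^sub>m A)) $$ (i,j)) (at z)"
proof -
  have e1: "(mexp (z \<cdot>\<^sub>m A) * A) $$ (i,j) = (\<Sum>l<n. ser A i l z * A $$ (l,j))"
    using mult_entry[OF mexp_carrier[OF A] A ij] mexp_entry[OF A] ij by simp
  have e2: "(A * mexp (z \<cdot>\<^sub>m A)) $$ (i,j) = (\<Sum>l<n. A $$ (i,l) * ser A l j z)"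
    using mult_entry[OF A mexp_carrier[OF A] ij] mexp_entry[OF A] ij by simp
  show "(ser A i j has_field_derivative (mexp (z \<cdot>\<^sub>m A) * A) $$ (i,j)) (at z)"
    unfolding e1 ser_mult_right[OF A A ij] using ser_deriv[OF A ij] by simp
  show "(ser A i j has_field_derivative (A * mexp (z \<cdot>\<^sub>m A)) $$ (i,j)) (at z)"
    unfolding e2 ser_mult_left[OF A A ij] using ser_deriv[OF A ij] by (simp add: pow_Suc_left[OF A] del: pow_mat.simps)
qed

lemma neg_of_real_deriv: "((\<lambda>s. - complex_of_real s) has_vector_derivative -1) (at t)"
  using has_vector_derivative_minus[OF has_vector_derivative_of_real[OF DERIV_ident]] by simp

lemma mexp_mhd:
  assumes A: "A \<in> carrier_mat n n"
  shows "mhd n n (\<lambda>s. mexp ((- complex_of_real s) \<cdot>\<^sub>m A)) ((-1) \<cdot>\<^sub>m (A * mexp ((- complex_of_real t) \<cdot>\<^sub>m A))) t"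
    "mhd n n (\<lambda>s. mexp ((- complex_of_real s) \<cdot>\<^sub>m A)) ((-1) \<cdot>\<^sub>m (mexp ((- complex_of_real t) \<cdot>\<^sub>m A) * A)) t"
proof -
  have ent: "(\<lambda>s. mexp ((- complex_of_real s) \<cdot>\<^sub>m A) $$ (i,j)) = ser A i j \<circ> (\<lambda>s. - complex_of_real s)"
    if "i < n" "j < n" for i j using mexp_entry[OF A that] by auto
  show "mhd n n (\<lambda>s. mexp ((- complex_of_real s) \<cdot>\<^sub>m A)) ((-1) \<cdot>\<^sub>m (A * mexp ((- complex_of_real t) \<cdot>\<^sub>m A))) t"
    unfolding mhd_def
  proof (intro conjI allI impI)
    fix i j assume ij: "i < n" "j < n"
    show "((\<lambda>s. mexp ((- complex_of_real s) \<cdot>\<^sub>m A) $$ (i,j)) has_vector_derivative ((-1) \<cdot>\<^sub>m (A * mexp ((- complex_of_real t) \<cdot>\<^sub>m A))) $$ (i,j)) (at t)"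
      unfolding ent[OF ij] using field_vector_diff_chain_at[OF neg_of_real_deriv mexp_deriv_complex(2)[OF A ij]] ij A
      by (simp add: mexp_carrier carrier_matD[OF A])
  qed (use A mexp_carrier in auto)
  show "mhd n n (\<lambda>s. mexp ((- complex_of_real s) \<cdot>\<^sub>m A)) ((-1) \<cdot>\<^sub>m (mexp ((- complex_of_real t) \<cdot>\<^sub>m A) * A)) t"
    unfolding mhd_def
  proof (intro conjI allI impI)
    fix i j assume ij: "i < n" "j < n"
    show "((\<lambda>s. mexp ((- complex_of_real s) \<cdot>\<^sub>m A) $$ (i,j)) has_vector_derivative ((-1) \<cdot>\<^sub>m (mexp ((- complex_of_real t) \<cdot>\<^sub>m A) * A)) $$ (i,j)) (at t)"
      unfolding ent[OF ij] using field_vector_diff_chain_at[OF neg_of_real_deriv mexp_deriv_complex(1)[OF A ij]] ij A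
      by (simp add: mexp_carrier carrier_matD[OF A])
  qed (use A mexp_carrier in auto)
qed


lemma mhd_cong: "mhd r c P D t \<Longrightarrow> D = D' \<Longrightarrow> mhd r c P D' t" by simp

lemma mhd_cong_fun: "mhd r c P D t \<Longrightarrow> (\<And>s. P s = Q s) \<Longrightarrow> mhd r c Q D t"
proof -
  assume "mhd r c P D t" "\<And>s. P s = Q s"
  then have "P = Q" by auto
  with \<open>mhd r c P D t\<close> show ?thesis by simp
qed

lemma mtrace_add: "A \<in> carrier_mat N N \<Longrightarrow> B \<in> carrier_mat N N \<Longrightarrow> mtrace (A + B) = mtrace A + mtrace B"
  by (simp add: mtrace_def sum.distrib)

lemma mtrace_minus: "A \<in> carrier_mat N N \<Longrightarrow> B \<in> carrier_mat N N \<Longrightarrow> mtrace (A - B) = mtrace A - mtrace B"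
  by (simp add: mtrace_def sum_subtractf)

lemma mtrace_smult: "A \<in> carrier_mat N N \<Longrightarrow> mtrace (c \<cdot>\<^sub>m A) = c * mtrace A"
  by (simp add: mtrace_def sum_distrib_left)

lemma mtrace_one: "mtrace (1\<^sub>m N) = of_nat N"
  by (simp add: mtrace_def)

definition EM :: "complex mat \<Rightarrow> real \<Rightarrow> complex mat" where
  "EM A t = mexp ((- complex_of_real t) \<cdot>\<^sub>m A)"

lemma EM_carrier: "A \<in> carrier_mat n n \<Longrightarrow> EM A t \<in> carrier_mat n n"
  unfolding EM_def by (rule mexp_carrier)

lemma Phi_eq: "Phi F H t b = (1 / mtrace (EM F t * EM H b)) \<cdot>\<^sub>m (EM F t * EM H b)"
  by (simp add: Phi_def EM_def Let_def)

lemma inv_deriv: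
  fixes Z :: "real \<Rightarrow> complex"
  assumes "(Z has_vector_derivative Z') (at t)" "Z t \<noteq> 0"
  shows "((\<lambda>s. 1 / Z s) has_vector_derivative Z' * - (inverse (Z t) ^ Suc (Suc 0))) (at t)"
proof -
  have "((inverse \<circ> Z) has_vector_derivative Z' * - (inverse (Z t) ^ Suc (Suc 0))) (at t)"
    by (rule field_vector_diff_chain_at[OF assms(1) DERIV_inverse[OF assms(2)]])
  moreover have "(inverse \<circ> Z) = (\<lambda>s. 1 / Z s)" by (auto simp: inverse_eq_divide)
  ultimately show ?thesis by simp
qed

lemma phi_alg:
  fixes Z tr :: complex
  assumes M: "M \<in> carrier_mat n n" and P: "P \<in> carrier_mat n n" and Z: "Z \<noteq> 0"
  shows "(1 / Z) \<cdot>\<^sub>m ((-1) \<cdot>\<^sub>m P) + ((- tr) * - (inverse Z ^ Suc (Suc 0))) \<cdot>\<^sub>m M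
       = ((1 / Z) * tr) \<cdot>\<^sub>m ((1 / Z) \<cdot>\<^sub>m M) + (-1) \<cdot>\<^sub>m ((1 / Z) \<cdot>\<^sub>m P)"
  by (rule eq_matI) (use M P Z in \<open>auto simp: field_simps power2_eq_square\<close>)

lemma Phi_dtau:
  assumes F: "F \<in> carrier_mat n n" and H: "H \<in> carrier_mat n n"
    and Z: "mtrace (EM F t * EM H b) \<noteq> 0"
  shows "mhd n n (\<lambda>s. Phi F H s b) (mtrace (F * Phi F H t b) \<cdot>\<^sub>m Phi F H t b + (-1) \<cdot>\<^sub>m (F * Phi F H t b)) t"
proof -
  define M where "M = EM F t * EM H b"
  define Zt where "Zt = mtrace M"
  have cF: "EM F t \<in> carrier_mat n n" and cH: "EM H b \<in> carrier_mat n n" using EM_carrier F H by auto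
  have cM: "M \<in> carrier_mat n n" unfolding M_def using cF cH by auto
  have cFM: "F * M \<in> carrier_mat n n" using F cM by auto
  have dM0: "mhd n n (\<lambda>s. EM F s * EM H b) (EM F t * 0\<^sub>m n n + ((-1) \<cdot>\<^sub>m (F * EM F t)) * EM H b) t"
    by (rule mhd_mult[OF mexp_mhd(1)[OF F, folded EM_def] mhd_const[OF cH]])
  have "EM F t * 0\<^sub>m n n + ((-1) \<cdot>\<^sub>m (F * EM F t)) * EM H b = (-1) \<cdot>\<^sub>m (F * M)"
  proof -
    have "EM F t * 0\<^sub>m n n = 0\<^sub>m n n" using cF by (rule right_mult_zero_mat)
    moreover have "((-1) \<cdot>\<^sub>m (F * EM F t)) * EM H b = (-1) \<cdot>\<^sub>m (F * M)"
      using F cF cH unfolding M_def by (subst mult_smult_assoc_mat[of _ n n]) auto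
    ultimately show ?thesis using cFM by simp
  qed
  with dM0 have dM: "mhd n n (\<lambda>s. EM F s * EM H b) ((-1) \<cdot>\<^sub>m (F * M)) t" by (rule mhd_cong)
  have trD: "mtrace ((-1) \<cdot>\<^sub>m (F * M)) = - mtrace (F * M)" using cFM by (simp add: mtrace_smult)
  have dZ: "((\<lambda>s. mtrace (EM F s * EM H b)) has_vector_derivative - mtrace (F * M)) (at t)"
    using mhd_trace[OF dM] trD by simp
  have dI: "((\<lambda>s. 1 / mtrace (EM F s * EM H b)) has_vector_derivative (- mtrace (F * M)) * - (inverse Zt ^ Suc (Suc 0))) (at t)"
    using inv_deriv[OF dZ] Z unfolding Zt_def M_def by simp
  have dP: "mhd n n (\<lambda>s. (1 / mtrace (EM F s * EM H b)) \<cdot>\<^sub>m (EM F s * EM H b))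
     ((1 / Zt) \<cdot>\<^sub>m ((-1) \<cdot>\<^sub>m (F * M)) + ((- mtrace (F * M)) * - (inverse Zt ^ Suc (Suc 0))) \<cdot>\<^sub>m M) t"
    using mhd_smult[OF dI dM] unfolding Zt_def M_def by simp
  have PhiE: "Phi F H t b = (1 / Zt) \<cdot>\<^sub>m M" unfolding Zt_def M_def by (rule Phi_eq)
  have FP: "F * Phi F H t b = (1 / Zt) \<cdot>\<^sub>m (F * M)" unfolding PhiE using F cM by (rule mult_smult_distrib)
  have trFP: "mtrace (F * Phi F H t b) = (1 / Zt) * mtrace (F * M)" unfolding FP using cFM by (rule mtrace_smult)
  have "(1 / Zt) \<cdot>\<^sub>m ((-1) \<cdot>\<^sub>m (F * M)) + ((- mtrace (F * M)) * - (inverse Zt ^ Suc (Suc 0))) \<cdot>\<^sub>m M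
     = mtrace (F * Phi F H t b) \<cdot>\<^sub>m Phi F H t b + (-1) \<cdot>\<^sub>m (F * Phi F H t b)"
    unfolding PhiE mult_smult_distrib[OF F cM] mtrace_smult[OF cFM] by (rule phi_alg[OF cM cFM]) (use Z in \<open>simp add: Zt_def M_def\<close>)
  with dP have "mhd n n (\<lambda>s. (1 / mtrace (EM F s * EM H b)) \<cdot>\<^sub>m (EM F s * EM H b))
     (mtrace (F * Phi F H t b) \<cdot>\<^sub>m Phi F H t b + (-1) \<cdot>\<^sub>m (F * Phi F H t b)) t" by (rule mhd_cong)
  then show ?thesis by (rule mhd_cong_fun) (simp add: Phi_eq)
qed

lemma Phi_dbeta:
  assumes F: "F \<in> carrier_mat n n" and H: "H \<in> carrier_mat n n"
    and Z: "mtrace (EM F t * EM H b) \<noteq> 0"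
  shows "mhd n n (\<lambda>s. Phi F H t s) (mtrace (Phi F H t b * H) \<cdot>\<^sub>m Phi F H t b + (-1) \<cdot>\<^sub>m (Phi F H t b * H)) b"
proof -
  define M where "M = EM F t * EM H b"
  define Zt where "Zt = mtrace M"
  have cF: "EM F t \<in> carrier_mat n n" and cH: "EM H b \<in> carrier_mat n n" using EM_carrier F H by auto
  have cM: "M \<in> carrier_mat n n" unfolding M_def using cF cH by auto
  have cMH: "M * H \<in> carrier_mat n n" using H cM by auto
  have dM0: "mhd n n (\<lambda>s. EM F t * EM H s) (EM F t * ((-1) \<cdot>\<^sub>m (EM H b * H)) + 0\<^sub>m n n * EM H b) b"
    by (rule mhd_mult[OF mhd_const[OF cF] mexp_mhd(2)[OF H, folded EM_def]])
  have "EM F t * ((-1) \<cdot>\<^sub>m (EM H b * H)) + 0\<^sub>m n n * EM H b = (-1) \<cdot>\<^sub>m (M * H)"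
  proof -
    have "0\<^sub>m n n * EM H b = 0\<^sub>m n n" using cH by (rule left_mult_zero_mat)
    moreover have "EM F t * ((-1) \<cdot>\<^sub>m (EM H b * H)) = (-1) \<cdot>\<^sub>m (M * H)"
      using H cF cH unfolding M_def by (subst mult_smult_distrib[of _ n n]) auto
    ultimately show ?thesis using cMH by simp
  qed
  with dM0 have dM: "mhd n n (\<lambda>s. EM F t * EM H s) ((-1) \<cdot>\<^sub>m (M * H)) b" by (rule mhd_cong)
  have trD: "mtrace ((-1) \<cdot>\<^sub>m (M * H)) = - mtrace (M * H)" using cMH by (simp add: mtrace_smult)
  have dZ: "((\<lambda>s. mtrace (EM F t * EM H s)) has_vector_derivative - mtrace (M * H)) (at b)"
    using mhd_trace[OF dM] trD by simp
  have dI: "((\<lambda>s. 1 / mtrace (EM F t * EM H s)) has_vector_derivative (- mtrace (M * H)) * - (inverse Zt ^ Suc (Suc 0))) (at b)"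
    using inv_deriv[OF dZ] Z unfolding Zt_def M_def by simp
  have dP: "mhd n n (\<lambda>s. (1 / mtrace (EM F t * EM H s)) \<cdot>\<^sub>m (EM F t * EM H s))
     ((1 / Zt) \<cdot>\<^sub>m ((-1) \<cdot>\<^sub>m (M * H)) + ((- mtrace (M * H)) * - (inverse Zt ^ Suc (Suc 0))) \<cdot>\<^sub>m M) b"
    using mhd_smult[OF dI dM] unfolding Zt_def M_def by simp
  have PhiE: "Phi F H t b = (1 / Zt) \<cdot>\<^sub>m M" unfolding Zt_def M_def by (rule Phi_eq)
  have PH: "Phi F H t b * H = (1 / Zt) \<cdot>\<^sub>m (M * H)" unfolding PhiE using cM H by (rule mult_smult_assoc_mat)
  have trPH: "mtrace (Phi F H t b * H) = (1 / Zt) * mtrace (M * H)" unfolding PH using cMH by (rule mtrace_smult)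
  have "(1 / Zt) \<cdot>\<^sub>m ((-1) \<cdot>\<^sub>m (M * H)) + ((- mtrace (M * H)) * - (inverse Zt ^ Suc (Suc 0))) \<cdot>\<^sub>m M
     = mtrace (Phi F H t b * H) \<cdot>\<^sub>m Phi F H t b + (-1) \<cdot>\<^sub>m (Phi F H t b * H)"
    unfolding PhiE mult_smult_assoc_mat[OF cM H] mtrace_smult[OF cMH] by (rule phi_alg[OF cM cMH]) (use Z in \<open>simp add: Zt_def M_def\<close>)
  with dP have "mhd n n (\<lambda>s. (1 / mtrace (EM F t * EM H s)) \<cdot>\<^sub>m (EM F t * EM H s))
     (mtrace (Phi F H t b * H) \<cdot>\<^sub>m Phi F H t b + (-1) \<cdot>\<^sub>m (Phi F H t b * H)) b" by (rule mhd_cong)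
  then show ?thesis by (rule mhd_cong_fun) (simp add: Phi_eq)
qed


lemma lin_alg:
  fixes c :: complex
  assumes "K \<in> carrier_mat N N" "K1 \<in> carrier_mat N N" "K2 \<in> carrier_mat N N"
  shows "(c \<cdot>\<^sub>m K + (-1) \<cdot>\<^sub>m K1) + ((of_nat q * c) \<cdot>\<^sub>m K + (-1) \<cdot>\<^sub>m K2)
       = (of_nat (Suc q) * c) \<cdot>\<^sub>m K + (-1) \<cdot>\<^sub>m (K2 + K1)"
  by (rule eq_matI) (use assms in \<open>auto simp: algebra_simps\<close>)

lemma tens_zero_deriv:
  "(0\<^sub>m 1 1 :: complex mat) = (of_nat 0 * c) \<cdot>\<^sub>m tens_pow 0 A + (-1) \<cdot>\<^sub>m (gsum n 0 X * tens_pow 0 A)"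
  "(0\<^sub>m 1 1 :: complex mat) = (of_nat 0 * c) \<cdot>\<^sub>m tens_pow 0 A + (-1) \<cdot>\<^sub>m (tens_pow 0 A * gsum n 0 X)"
  by (rule eq_matI, auto simp: gsum_def msum_def)+

lemma tens_dleft:
  assumes X: "X \<in> carrier_mat n n" and P: "mhd n n \<Phi> (c \<cdot>\<^sub>m \<Phi> t + (-1) \<cdot>\<^sub>m (X * \<Phi> t)) t"
  shows "mhd (n^q) (n^q) (\<lambda>s. tens_pow q (\<Phi> s))
           ((of_nat q * c) \<cdot>\<^sub>m tens_pow q (\<Phi> t) + (-1) \<cdot>\<^sub>m (gsum n q X * tens_pow q (\<Phi> t))) t"
proof (induction q)
  case 0
  have "mhd (n^0) (n^0) (\<lambda>s. tens_pow 0 (\<Phi> s)) (0\<^sub>m 1 1) t" using mhd_const[of "1\<^sub>m 1" 1 1] by simp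
  then show ?case by (rule mhd_cong) (rule tens_zero_deriv)
next
  case (Suc q)
  define T where "T = tens_pow q (\<Phi> t)"
  define P0 where "P0 = \<Phi> t"
  define G where "G = gsum n q X"
  define K where "K = kron T P0"
  have cP: "P0 \<in> carrier_mat n n" unfolding P0_def using mhdD(1)[OF P] .
  have cT: "T \<in> carrier_mat (n^q) (n^q)" unfolding T_def using tens_pow_carrier mhdD(1)[OF P] by blast
  have cG: "G \<in> carrier_mat (n^q) (n^q)" unfolding G_def by (rule gsum_carrier[OF X])
  have cK: "K \<in> carrier_mat (n^q*n) (n^q*n)" unfolding K_def using cT cP by (rule kron_carrierI)
  have c1: "kron (1\<^sub>m (n^q)) X * K \<in> carrier_mat (n^q*n) (n^q*n)"
    using cK X by (metis kron_carrierI mult_carrier_mat one_carrier_mat)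
  have c2: "kron G (1\<^sub>m n) * K \<in> carrier_mat (n^q*n) (n^q*n)"
    using cK cG by (metis kron_carrierI mult_carrier_mat one_carrier_mat)
  have k: "mhd (n^q * n) (n^q * n) (\<lambda>s. kron (tens_pow q (\<Phi> s)) (\<Phi> s))
     (kron T (c \<cdot>\<^sub>m P0 + (-1) \<cdot>\<^sub>m (X * P0)) + kron ((of_nat q * c) \<cdot>\<^sub>m T + (-1) \<cdot>\<^sub>m (G * T)) P0) t"
    using mhd_kron[OF Suc.IH P] unfolding T_def P0_def G_def .
  have e1: "kron T (c \<cdot>\<^sub>m P0 + (-1) \<cdot>\<^sub>m (X * P0)) = c \<cdot>\<^sub>m K + (-1) \<cdot>\<^sub>m (kron (1\<^sub>m (n^q)) X * K)"
  proof -
    have "kron T (c \<cdot>\<^sub>m P0 + (-1) \<cdot>\<^sub>m (X * P0)) = kron T (c \<cdot>\<^sub>m P0) + kron T ((-1) \<cdot>\<^sub>m (X * P0))"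
      using cP X by (intro kron_add_right[of _ n n]) auto
    moreover have "kron (1\<^sub>m (n^q)) X * K = kron T (X * P0)"
      unfolding K_def using kron_mult[OF one_carrier_mat X cT cP] cT by simp
    ultimately show ?thesis by (simp add: kron_smult_right K_def)
  qed
  have e2: "kron ((of_nat q * c) \<cdot>\<^sub>m T + (-1) \<cdot>\<^sub>m (G * T)) P0 = (of_nat q * c) \<cdot>\<^sub>m K + (-1) \<cdot>\<^sub>m (kron G (1\<^sub>m n) * K)"
  proof -
    have "kron ((of_nat q * c) \<cdot>\<^sub>m T + (-1) \<cdot>\<^sub>m (G * T)) P0 = kron ((of_nat q * c) \<cdot>\<^sub>m T) P0 + kron ((-1) \<cdot>\<^sub>m (G * T)) P0"
      using cT cG by (intro kron_add_left[of _ "n^q" "n^q"]) auto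
    moreover have "kron G (1\<^sub>m n) * K = kron (G * T) P0"
      unfolding K_def using kron_mult[OF cG one_carrier_mat cT cP] cP by simp
    ultimately show ?thesis by (simp add: kron_smult_left K_def)
  qed
  have e3: "gsum n (Suc q) X * K = kron G (1\<^sub>m n) * K + kron (1\<^sub>m (n^q)) X * K"
    unfolding gsum_Suc[OF X] G_def[symmetric]
    by (rule add_mult_distrib_mat[OF _ _ cK]) (use cG X in \<open>auto intro!: kron_carrierI\<close>)
  have "kron T (c \<cdot>\<^sub>m P0 + (-1) \<cdot>\<^sub>m (X * P0)) + kron ((of_nat q * c) \<cdot>\<^sub>m T + (-1) \<cdot>\<^sub>m (G * T)) P0
      = (of_nat (Suc q) * c) \<cdot>\<^sub>m K + (-1) \<cdot>\<^sub>m (gsum n (Suc q) X * K)"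
    unfolding e1 e2 e3 by (rule lin_alg[OF cK c1 c2])
  with k have k2: "mhd (n^q * n) (n^q * n) (\<lambda>s. kron (tens_pow q (\<Phi> s)) (\<Phi> s))
     ((of_nat (Suc q) * c) \<cdot>\<^sub>m K + (-1) \<cdot>\<^sub>m (gsum n (Suc q) X * K)) t" by (rule mhd_cong)
  have KK: "K = tens_pow (Suc q) (\<Phi> t)" unfolding K_def T_def P0_def by (simp only: tens_pow_Suc_right)
  have nn: "n^q * n = n^Suc q" by (simp add: mult.commute)
  show ?case using k2 unfolding KK nn by (rule mhd_cong_fun) (simp only: tens_pow_Suc_right)
qed

lemma lin_alg2:
  fixes c :: complex
  assumes "K \<in> carrier_mat N N" "K1 \<in> carrier_mat N N" "K2 \<in> carrier_mat N N"
  shows "(c \<cdot>\<^sub>m K + (-1) \<cdot>\<^sub>m K1) + ((of_nat q * c) \<cdot>\<^sub>m K + (-1) \<cdot>\<^sub>m K2)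
       = (of_nat (Suc q) * c) \<cdot>\<^sub>m K + (-1) \<cdot>\<^sub>m (K2 + K1)"
  by (rule lin_alg[OF assms])

lemma tens_dright:
  assumes X: "X \<in> carrier_mat n n" and P: "mhd n n \<Phi> (c \<cdot>\<^sub>m \<Phi> t + (-1) \<cdot>\<^sub>m (\<Phi> t * X)) t"
  shows "mhd (n^q) (n^q) (\<lambda>s. tens_pow q (\<Phi> s))
           ((of_nat q * c) \<cdot>\<^sub>m tens_pow q (\<Phi> t) + (-1) \<cdot>\<^sub>m (tens_pow q (\<Phi> t) * gsum n q X)) t"
proof (induction q)
  case 0
  have "mhd (n^0) (n^0) (\<lambda>s. tens_pow 0 (\<Phi> s)) (0\<^sub>m 1 1) t" using mhd_const[of "1\<^sub>m 1" 1 1] by simp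
  then show ?case by (rule mhd_cong) (rule tens_zero_deriv)
next
  case (Suc q)
  define T where "T = tens_pow q (\<Phi> t)"
  define P0 where "P0 = \<Phi> t"
  define G where "G = gsum n q X"
  define K where "K = kron T P0"
  have cP: "P0 \<in> carrier_mat n n" unfolding P0_def using mhdD(1)[OF P] .
  have cT: "T \<in> carrier_mat (n^q) (n^q)" unfolding T_def using tens_pow_carrier mhdD(1)[OF P] by blast
  have cG: "G \<in> carrier_mat (n^q) (n^q)" unfolding G_def by (rule gsum_carrier[OF X])
  have cK: "K \<in> carrier_mat (n^q*n) (n^q*n)" unfolding K_def using cT cP by (rule kron_carrierI)
  have c1: "K * kron (1\<^sub>m (n^q)) X \<in> carrier_mat (n^q*n) (n^q*n)"
    using cK X by (metis kron_carrierI mult_carrier_mat one_carrier_mat)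
  have c2: "K * kron G (1\<^sub>m n) \<in> carrier_mat (n^q*n) (n^q*n)"
    using cK cG by (metis kron_carrierI mult_carrier_mat one_carrier_mat)
  have k: "mhd (n^q * n) (n^q * n) (\<lambda>s. kron (tens_pow q (\<Phi> s)) (\<Phi> s))
     (kron T (c \<cdot>\<^sub>m P0 + (-1) \<cdot>\<^sub>m (P0 * X)) + kron ((of_nat q * c) \<cdot>\<^sub>m T + (-1) \<cdot>\<^sub>m (T * G)) P0) t"
    using mhd_kron[OF Suc.IH P] unfolding T_def P0_def G_def .
  have e1: "kron T (c \<cdot>\<^sub>m P0 + (-1) \<cdot>\<^sub>m (P0 * X)) = c \<cdot>\<^sub>m K + (-1) \<cdot>\<^sub>m (K * kron (1\<^sub>m (n^q)) X)"
  proof -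
    have "kron T (c \<cdot>\<^sub>m P0 + (-1) \<cdot>\<^sub>m (P0 * X)) = kron T (c \<cdot>\<^sub>m P0) + kron T ((-1) \<cdot>\<^sub>m (P0 * X))"
      using cP X by (intro kron_add_right[of _ n n]) auto
    moreover have "K * kron (1\<^sub>m (n^q)) X = kron T (P0 * X)"
      unfolding K_def using kron_mult[OF cT cP one_carrier_mat X] cT by simp
    ultimately show ?thesis by (simp add: kron_smult_right K_def)
  qed
  have e2: "kron ((of_nat q * c) \<cdot>\<^sub>m T + (-1) \<cdot>\<^sub>m (T * G)) P0 = (of_nat q * c) \<cdot>\<^sub>m K + (-1) \<cdot>\<^sub>m (K * kron G (1\<^sub>m n))"
  proof -
    have "kron ((of_nat q * c) \<cdot>\<^sub>m T + (-1) \<cdot>\<^sub>m (T * G)) P0 = kron ((of_nat q * c) \<cdot>\<^sub>m T) P0 + kron ((-1) \<cdot>\<^sub>m (T * G)) P0"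
      using cT cG by (intro kron_add_left[of _ "n^q" "n^q"]) auto
    moreover have "K * kron G (1\<^sub>m n) = kron (T * G) P0"
      unfolding K_def using kron_mult[OF cT cP cG one_carrier_mat] cP by simp
    ultimately show ?thesis by (simp add: kron_smult_left K_def)
  qed
  have e3: "K * gsum n (Suc q) X = K * kron G (1\<^sub>m n) + K * kron (1\<^sub>m (n^q)) X"
    unfolding gsum_Suc[OF X] G_def[symmetric]
    by (rule mult_add_distrib_mat[OF cK]) (use cG X in \<open>auto intro!: kron_carrierI\<close>)
  have "kron T (c \<cdot>\<^sub>m P0 + (-1) \<cdot>\<^sub>m (P0 * X)) + kron ((of_nat q * c) \<cdot>\<^sub>m T + (-1) \<cdot>\<^sub>m (T * G)) P0
      = (of_nat (Suc q) * c) \<cdot>\<^sub>m K + (-1) \<cdot>\<^sub>m (K * gsum n (Suc q) X)"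
    unfolding e1 e2 e3 by (rule lin_alg[OF cK c1 c2])
  with k have k2: "mhd (n^q * n) (n^q * n) (\<lambda>s. kron (tens_pow q (\<Phi> s)) (\<Phi> s))
     ((of_nat (Suc q) * c) \<cdot>\<^sub>m K + (-1) \<cdot>\<^sub>m (K * gsum n (Suc q) X)) t" by (rule mhd_cong)
  have KK: "K = tens_pow (Suc q) (\<Phi> t)" unfolding K_def T_def P0_def by (simp only: tens_pow_Suc_right)
  have nn: "n^q * n = n^Suc q" by (simp add: mult.commute)
  show ?case using k2 unfolding KK nn by (rule mhd_cong_fun) (simp only: tens_pow_Suc_right)
qed


lemma rhs_left:
  assumes A: "A \<in> carrier_mat N N" and G: "G \<in> carrier_mat N N" and T: "T \<in> carrier_mat N N"
    and X: "X \<in> carrier_mat n n" and P: "P0 \<in> carrier_mat n n"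
  shows "mtrace ((kron A (1\<^sub>m n) * (kron G (1\<^sub>m n) - a \<cdot>\<^sub>m kron (1\<^sub>m N) X)) * kron T P0)
       = mtrace (A * G * T) * mtrace P0 - a * (mtrace (A * T) * mtrace (X * P0))"
proof -
  have cA1: "kron A (1\<^sub>m n) \<in> carrier_mat (N*n) (N*n)" using A by (intro kron_carrierI) auto
  have cG1: "kron G (1\<^sub>m n) \<in> carrier_mat (N*n) (N*n)" using G by (intro kron_carrierI) auto
  have c1X: "kron (1\<^sub>m N) X \<in> carrier_mat (N*n) (N*n)" using X by (intro kron_carrierI) auto
  have cTP: "kron T P0 \<in> carrier_mat (N*n) (N*n)" using T P by (intro kron_carrierI) auto
  have cAG: "A * G \<in> carrier_mat N N" using A G by auto
  have "kron A (1\<^sub>m n) * (kron G (1\<^sub>m n) - a \<cdot>\<^sub>m kron (1\<^sub>m N) X)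
      = kron A (1\<^sub>m n) * kron G (1\<^sub>m n) - kron A (1\<^sub>m n) * (a \<cdot>\<^sub>m kron (1\<^sub>m N) X)"
    using cA1 cG1 c1X by (intro mult_minus_distrib_mat) auto
  also have "kron A (1\<^sub>m n) * kron G (1\<^sub>m n) = kron (A * G) (1\<^sub>m n)"
    using kron_mult[OF A one_carrier_mat G one_carrier_mat] by simp
  also have "kron A (1\<^sub>m n) * (a \<cdot>\<^sub>m kron (1\<^sub>m N) X) = a \<cdot>\<^sub>m kron A X"
    using mult_smult_distrib[OF cA1 c1X] kron_mult[OF A one_carrier_mat one_carrier_mat X] A X by simp
  finally have e1: "kron A (1\<^sub>m n) * (kron G (1\<^sub>m n) - a \<cdot>\<^sub>m kron (1\<^sub>m N) X) = kron (A * G) (1\<^sub>m n) - a \<cdot>\<^sub>m kron A X" .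
  have cAG1: "kron (A * G) (1\<^sub>m n) \<in> carrier_mat (N*n) (N*n)" using cAG by (intro kron_carrierI) auto
  have cAX: "a \<cdot>\<^sub>m kron A X \<in> carrier_mat (N*n) (N*n)" using A X by (intro smult_carrier_mat kron_carrierI) auto
  have "(kron (A * G) (1\<^sub>m n) - a \<cdot>\<^sub>m kron A X) * kron T P0 = kron (A * G) (1\<^sub>m n) * kron T P0 - (a \<cdot>\<^sub>m kron A X) * kron T P0"
    by (rule minus_mult_distrib_mat[OF cAG1 cAX cTP])
  also have "kron (A * G) (1\<^sub>m n) * kron T P0 = kron (A * G * T) P0"
    using kron_mult[OF cAG one_carrier_mat T P] P by simp
  also have "(a \<cdot>\<^sub>m kron A X) * kron T P0 = a \<cdot>\<^sub>m kron (A * T) (X * P0)"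
    using mult_smult_assoc_mat[of "kron A X" "N*n" "N*n" "kron T P0" "N*n"] kron_mult[OF A X T P] A X cTP
    by (simp add: kron_carrierI)
  finally have e2: "(kron (A * G) (1\<^sub>m n) - a \<cdot>\<^sub>m kron A X) * kron T P0 = kron (A * G * T) P0 - a \<cdot>\<^sub>m kron (A * T) (X * P0)" .
  have cAGT: "A * G * T \<in> carrier_mat N N" using cAG T by auto
  have cAT: "A * T \<in> carrier_mat N N" "X * P0 \<in> carrier_mat n n" using A T X P by auto
  show ?thesis unfolding e1 e2
    using cAGT cAT P
    by (simp add: mtrace_minus[of _ "N*n"] mtrace_smult[of _ "N*n"] mtrace_kron kron_carrierI)
qed

lemma rhs_right:
  assumes A: "A \<in> carrier_mat N N" and G: "G \<in> carrier_mat N N" and T: "T \<in> carrier_mat N N"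
    and X: "X \<in> carrier_mat n n" and P: "P0 \<in> carrier_mat n n"
  shows "mtrace (((kron G (1\<^sub>m n) - a \<cdot>\<^sub>m kron (1\<^sub>m N) X) * kron A (1\<^sub>m n)) * kron T P0)
       = mtrace (G * A * T) * mtrace P0 - a * (mtrace (A * T) * mtrace (X * P0))"
proof -
  have cA1: "kron A (1\<^sub>m n) \<in> carrier_mat (N*n) (N*n)" using A by (intro kron_carrierI) auto
  have cG1: "kron G (1\<^sub>m n) \<in> carrier_mat (N*n) (N*n)" using G by (intro kron_carrierI) auto
  have c1X: "kron (1\<^sub>m N) X \<in> carrier_mat (N*n) (N*n)" using X by (intro kron_carrierI) auto
  have cTP: "kron T P0 \<in> carrier_mat (N*n) (N*n)" using T P by (intro kron_carrierI) auto
  have cGA: "G * A \<in> carrier_mat N N" using A G by auto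
  have "(kron G (1\<^sub>m n) - a \<cdot>\<^sub>m kron (1\<^sub>m N) X) * kron A (1\<^sub>m n)
      = kron G (1\<^sub>m n) * kron A (1\<^sub>m n) - (a \<cdot>\<^sub>m kron (1\<^sub>m N) X) * kron A (1\<^sub>m n)"
    using cA1 cG1 c1X by (intro minus_mult_distrib_mat) auto
  also have "kron G (1\<^sub>m n) * kron A (1\<^sub>m n) = kron (G * A) (1\<^sub>m n)"
    using kron_mult[OF G one_carrier_mat A one_carrier_mat] by simp
  also have "(a \<cdot>\<^sub>m kron (1\<^sub>m N) X) * kron A (1\<^sub>m n) = a \<cdot>\<^sub>m kron A X"
    using mult_smult_assoc_mat[OF c1X cA1] kron_mult[OF one_carrier_mat X A one_carrier_mat] A X by simp
  finally have e1: "(kron G (1\<^sub>m n) - a \<cdot>\<^sub>m kron (1\<^sub>m N) X) * kron A (1\<^sub>m n) = kron (G * A) (1\<^sub>m n) - a \<cdot>\<^sub>m kron A X" .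
  have cGA1: "kron (G * A) (1\<^sub>m n) \<in> carrier_mat (N*n) (N*n)" using cGA by (intro kron_carrierI) auto
  have cAX: "a \<cdot>\<^sub>m kron A X \<in> carrier_mat (N*n) (N*n)" using A X by (intro smult_carrier_mat kron_carrierI) auto
  have "(kron (G * A) (1\<^sub>m n) - a \<cdot>\<^sub>m kron A X) * kron T P0 = kron (G * A) (1\<^sub>m n) * kron T P0 - (a \<cdot>\<^sub>m kron A X) * kron T P0"
    by (rule minus_mult_distrib_mat[OF cGA1 cAX cTP])
  also have "kron (G * A) (1\<^sub>m n) * kron T P0 = kron (G * A * T) P0"
    using kron_mult[OF cGA one_carrier_mat T P] P by simp
  also have "(a \<cdot>\<^sub>m kron A X) * kron T P0 = a \<cdot>\<^sub>m kron (A * T) (X * P0)"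
    using mult_smult_assoc_mat[of "kron A X" "N*n" "N*n" "kron T P0" "N*n"] kron_mult[OF A X T P] A X cTP
    by (simp add: kron_carrierI)
  finally have e2: "(kron (G * A) (1\<^sub>m n) - a \<cdot>\<^sub>m kron A X) * kron T P0 = kron (G * A * T) P0 - a \<cdot>\<^sub>m kron (A * T) (X * P0)" .
  have cGAT: "G * A * T \<in> carrier_mat N N" using cGA T by auto
  have cAT: "A * T \<in> carrier_mat N N" "X * P0 \<in> carrier_mat n n" using A T X P by auto
  show ?thesis unfolding e1 e2
    using cGAT cAT P
    by (simp add: mtrace_minus[of _ "N*n"] mtrace_smult[of _ "N*n"] mtrace_kron kron_carrierI)
qed


lemma trace_dleft:
  assumes X: "X \<in> carrier_mat n n" and A: "A \<in> carrier_mat (n^q) (n^q)" and q: "1 \<le> q"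
    and P: "mhd n n \<Phi> (c \<cdot>\<^sub>m \<Phi> t + (-1) \<cdot>\<^sub>m (X * \<Phi> t)) t"
    and c: "c = mtrace (X * \<Phi> t)" and tr1: "mtrace (\<Phi> t) = 1"
  shows "((\<lambda>s. mtrace (A * tens_pow q (\<Phi> s))) has_vector_derivative
           - mtrace ((kron A (1\<^sub>m n) * op_sup n (Suc q) q X) * tens_pow (Suc q) (\<Phi> t))) (at t)"
proof -
  define T where "T = tens_pow q (\<Phi> t)"
  define P0 where "P0 = \<Phi> t"
  define G where "G = gsum n q X"
  have cP: "P0 \<in> carrier_mat n n" unfolding P0_def using mhdD(1)[OF P] .
  have cT: "T \<in> carrier_mat (n^q) (n^q)" unfolding T_def using tens_pow_carrier mhdD(1)[OF P] by blast
  have cG: "G \<in> carrier_mat (n^q) (n^q)" unfolding G_def by (rule gsum_carrier[OF X])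
  have d: "mhd (n^q) (n^q) (\<lambda>s. A * tens_pow q (\<Phi> s))
      (A * ((of_nat q * c) \<cdot>\<^sub>m T + (-1) \<cdot>\<^sub>m (G * T)) + 0\<^sub>m (n^q) (n^q) * T) t"
    using mhd_mult[OF mhd_const[OF A] tens_dleft[OF X P, of q]] unfolding T_def G_def .
  have cGT: "G * T \<in> carrier_mat (n^q) (n^q)" using cG cT by auto
  have cAT: "A * T \<in> carrier_mat (n^q) (n^q)" using A cT by auto
  have cAGT: "A * (G * T) \<in> carrier_mat (n^q) (n^q)" using A cGT by auto
  have "A * ((of_nat q * c) \<cdot>\<^sub>m T + (-1) \<cdot>\<^sub>m (G * T)) + 0\<^sub>m (n^q) (n^q) * T
      = (of_nat q * c) \<cdot>\<^sub>m (A * T) + (-1) \<cdot>\<^sub>m (A * (G * T))"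
  proof -
    have "A * ((of_nat q * c) \<cdot>\<^sub>m T + (-1) \<cdot>\<^sub>m (G * T)) = A * ((of_nat q * c) \<cdot>\<^sub>m T) + A * ((-1) \<cdot>\<^sub>m (G * T))"
      using A cT cGT by (intro mult_add_distrib_mat) auto
    also have "\<dots> = (of_nat q * c) \<cdot>\<^sub>m (A * T) + (-1) \<cdot>\<^sub>m (A * (G * T))"
      using mult_smult_distrib[OF A cT] mult_smult_distrib[OF A cGT] by simp
    finally show ?thesis using left_mult_zero_mat[OF cT] cAT cAGT by simp
  qed
  then have eL: "mtrace (A * ((of_nat q * c) \<cdot>\<^sub>m T + (-1) \<cdot>\<^sub>m (G * T)) + 0\<^sub>m (n^q) (n^q) * T)
      = of_nat q * c * mtrace (A * T) - mtrace (A * (G * T))"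
    using cAT cAGT by (simp add: mtrace_add[of _ "n^q"] mtrace_smult[of _ "n^q"])
  have eR: "mtrace ((kron A (1\<^sub>m n) * op_sup n (Suc q) q X) * tens_pow (Suc q) (\<Phi> t))
      = mtrace (A * G * T) * mtrace P0 - of_nat q * (mtrace (A * T) * mtrace (X * P0))"
  proof -
    have e1: "op_sup n (Suc q) q X = kron G (1\<^sub>m n) - of_nat q \<cdot>\<^sub>m kron (1\<^sub>m (n^q)) X"
      unfolding G_def by (rule op_sup_Suc[OF X q])
    have e2: "tens_pow (Suc q) (\<Phi> t) = kron T P0" unfolding T_def P0_def by (rule tens_pow_Suc_right)
    show ?thesis unfolding e1 e2 by (rule rhs_left[OF A cG cT X cP])
  qed
  have as: "A * G * T = A * (G * T)" using A cG cT by simp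
  have LR: "mtrace (A * ((of_nat q * c) \<cdot>\<^sub>m T + (-1) \<cdot>\<^sub>m (G * T)) + 0\<^sub>m (n^q) (n^q) * T)
      = - mtrace ((kron A (1\<^sub>m n) * op_sup n (Suc q) q X) * tens_pow (Suc q) (\<Phi> t))"
    unfolding eL eR as using c tr1 by (simp add: P0_def algebra_simps)
  show ?thesis using mhd_trace[OF d] unfolding LR .
qed

lemma trace_dright:
  assumes X: "X \<in> carrier_mat n n" and A: "A \<in> carrier_mat (n^q) (n^q)" and q: "1 \<le> q"
    and P: "mhd n n \<Phi> (c \<cdot>\<^sub>m \<Phi> t + (-1) \<cdot>\<^sub>m (\<Phi> t * X)) t"
    and c: "c = mtrace (\<Phi> t * X)" and tr1: "mtrace (\<Phi> t) = 1"
  shows "((\<lambda>s. mtrace (A * tens_pow q (\<Phi> s))) has_vector_derivative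
           - mtrace ((op_sup n (Suc q) q X * kron A (1\<^sub>m n)) * tens_pow (Suc q) (\<Phi> t))) (at t)"
proof -
  define T where "T = tens_pow q (\<Phi> t)"
  define P0 where "P0 = \<Phi> t"
  define G where "G = gsum n q X"
  have cP: "P0 \<in> carrier_mat n n" unfolding P0_def using mhdD(1)[OF P] .
  have cT: "T \<in> carrier_mat (n^q) (n^q)" unfolding T_def using tens_pow_carrier mhdD(1)[OF P] by blast
  have cG: "G \<in> carrier_mat (n^q) (n^q)" unfolding G_def by (rule gsum_carrier[OF X])
  have d: "mhd (n^q) (n^q) (\<lambda>s. A * tens_pow q (\<Phi> s))
      (A * ((of_nat q * c) \<cdot>\<^sub>m T + (-1) \<cdot>\<^sub>m (T * G)) + 0\<^sub>m (n^q) (n^q) * T) t"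
    using mhd_mult[OF mhd_const[OF A] tens_dright[OF X P, of q]] unfolding T_def G_def .
  have cTG: "T * G \<in> carrier_mat (n^q) (n^q)" using cG cT by auto
  have cAT: "A * T \<in> carrier_mat (n^q) (n^q)" using A cT by auto
  have cATG: "A * (T * G) \<in> carrier_mat (n^q) (n^q)" using A cTG by auto
  have "A * ((of_nat q * c) \<cdot>\<^sub>m T + (-1) \<cdot>\<^sub>m (T * G)) + 0\<^sub>m (n^q) (n^q) * T
      = (of_nat q * c) \<cdot>\<^sub>m (A * T) + (-1) \<cdot>\<^sub>m (A * (T * G))"
  proof -
    have "A * ((of_nat q * c) \<cdot>\<^sub>m T + (-1) \<cdot>\<^sub>m (T * G)) = A * ((of_nat q * c) \<cdot>\<^sub>m T) + A * ((-1) \<cdot>\<^sub>m (T * G))"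
      using A cT cTG by (intro mult_add_distrib_mat) auto
    also have "\<dots> = (of_nat q * c) \<cdot>\<^sub>m (A * T) + (-1) \<cdot>\<^sub>m (A * (T * G))"
      using mult_smult_distrib[OF A cT] mult_smult_distrib[OF A cTG] by simp
    finally show ?thesis using left_mult_zero_mat[OF cT] cAT cATG by simp
  qed
  then have eL: "mtrace (A * ((of_nat q * c) \<cdot>\<^sub>m T + (-1) \<cdot>\<^sub>m (T * G)) + 0\<^sub>m (n^q) (n^q) * T)
      = of_nat q * c * mtrace (A * T) - mtrace (A * (T * G))"
    using cAT cATG by (simp add: mtrace_add[of _ "n^q"] mtrace_smult[of _ "n^q"])
  have eR: "mtrace ((op_sup n (Suc q) q X * kron A (1\<^sub>m n)) * tens_pow (Suc q) (\<Phi> t))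
      = mtrace (G * A * T) * mtrace P0 - of_nat q * (mtrace (A * T) * mtrace (X * P0))"
  proof -
    have e1: "op_sup n (Suc q) q X = kron G (1\<^sub>m n) - of_nat q \<cdot>\<^sub>m kron (1\<^sub>m (n^q)) X"
      unfolding G_def by (rule op_sup_Suc[OF X q])
    have e2: "tens_pow (Suc q) (\<Phi> t) = kron T P0" unfolding T_def P0_def by (rule tens_pow_Suc_right)
    show ?thesis unfolding e1 e2 by (rule rhs_right[OF A cG cT X cP])
  qed
  have as: "mtrace (A * (T * G)) = mtrace (G * A * T)"
  proof -
    have "A * (T * G) = (A * T) * G" using A cT cG by simp
    then have "mtrace (A * (T * G)) = mtrace (G * (A * T))" using mtrace_mult_comm[OF cAT cG] by simp
    also have "G * (A * T) = G * A * T" using A cT cG by simp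
    finally show ?thesis .
  qed
  have cm: "mtrace (X * P0) = mtrace (P0 * X)" using mtrace_mult_comm[OF X cP] .
  have LR: "mtrace (A * ((of_nat q * c) \<cdot>\<^sub>m T + (-1) \<cdot>\<^sub>m (T * G)) + 0\<^sub>m (n^q) (n^q) * T)
      = - mtrace ((op_sup n (Suc q) q X * kron A (1\<^sub>m n)) * tens_pow (Suc q) (\<Phi> t))"
    unfolding eL eR as cm using c tr1 by (simp add: P0_def algebra_simps)
  show ?thesis using mhd_trace[OF d] unfolding LR .
qed


lemma nderiv_eq:
  assumes U: "open U" and g: "\<And>t. t \<in> U \<Longrightarrow> g t = Pk 0 t"
    and d: "\<And>k t. t \<in> U \<Longrightarrow> (Pk k has_vector_derivative Pk (Suc k) t) (at t)"
  shows "t \<in> U \<Longrightarrow> nderiv k g t = Pk k t"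
proof (induction k arbitrary: t)
  case 0 then show ?case using g by simp
next
  case (Suc k)
  have "(nderiv k g has_vector_derivative Pk (Suc k) t) (at t)"
    by (rule has_vector_derivative_transform_within_open[OF d[OF Suc.prems] U Suc.prems])
       (simp add: Suc.IH)
  then show ?case by (simp add: vector_derivative_at)
qed

lemma Z_open_tau:
  assumes F: "F \<in> carrier_mat n n" and H: "H \<in> carrier_mat n n"
  shows "open {t. mtrace (EM F t * EM H b) \<noteq> 0}"
proof -
  have "((\<lambda>s. mtrace (EM F s * EM H b)) has_vector_derivative
     mtrace (EM F t * 0\<^sub>m n n + ((-1) \<cdot>\<^sub>m (F * EM F t)) * EM H b)) (at t)" for t
    by (rule mhd_trace[OF mhd_mult[OF mexp_mhd(1)[OF F, folded EM_def] mhd_const[OF EM_carrier[OF H]]]])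
  then have "continuous_on UNIV (\<lambda>s. mtrace (EM F s * EM H b))"
    by (intro continuous_on_vector_derivative) (auto intro: has_vector_derivative_at_within)
  then show ?thesis using open_Collect_neq[of "\<lambda>s. mtrace (EM F s * EM H b)" "\<lambda>s. 0"] by simp
qed

lemma Z_open_beta:
  assumes F: "F \<in> carrier_mat n n" and H: "H \<in> carrier_mat n n"
  shows "open {b. mtrace (EM F t * EM H b) \<noteq> 0}"
proof -
  have "((\<lambda>s. mtrace (EM F t * EM H s)) has_vector_derivative
     mtrace (EM F t * ((-1) \<cdot>\<^sub>m (EM H b * H)) + 0\<^sub>m n n * EM H b)) (at b)" for b
    by (rule mhd_trace[OF mhd_mult[OF mhd_const[OF EM_carrier[OF F]] mexp_mhd(2)[OF H, folded EM_def]]])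
  then have "continuous_on UNIV (\<lambda>s. mtrace (EM F t * EM H s))"
    by (intro continuous_on_vector_derivative) (auto intro: has_vector_derivative_at_within)
  then show ?thesis using open_Collect_neq[of "\<lambda>s. mtrace (EM F t * EM H s)" "\<lambda>s. 0"] by simp
qed

lemma Phi_trace:
  assumes F: "F \<in> carrier_mat n n" and H: "H \<in> carrier_mat n n" and Z: "mtrace (EM F t * EM H b) \<noteq> 0"
  shows "mtrace (Phi F H t b) = 1"
proof -
  have "EM F t * EM H b \<in> carrier_mat n n" by (rule mult_carrier_mat[OF EM_carrier[OF F] EM_carrier[OF H]])
  then show ?thesis unfolding Phi_eq using Z by (simp add: mtrace_smult)
qed

lemma Phi_carrier: "F \<in> carrier_mat n n \<Longrightarrow> H \<in> carrier_mat n n \<Longrightarrow> Phi F H t b \<in> carrier_mat n n"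
  unfolding Phi_eq using EM_carrier by (metis mult_carrier_mat smult_carrier_mat)

fun Aseq :: "nat \<Rightarrow> nat \<Rightarrow> complex mat \<Rightarrow> complex mat \<Rightarrow> complex mat" where
  "Aseq n 0 f F = f"
| "Aseq n (Suc k) f F = kron (Aseq n k f F) (1\<^sub>m n) * op_sup n (Suc (Suc k)) (Suc k) F"

fun Bseq :: "nat \<Rightarrow> nat \<Rightarrow> nat \<Rightarrow> complex mat \<Rightarrow> complex mat \<Rightarrow> complex mat \<Rightarrow> complex mat" where
  "Bseq n m1 0 f F H = Aseq n m1 f F"
| "Bseq n m1 (Suc j) f F H = op_sup n (Suc (Suc (m1 + j))) (Suc (m1 + j)) H * kron (Bseq n m1 j f F H) (1\<^sub>m n)"

lemma Aseq_carrier: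
  assumes f: "f \<in> carrier_mat n n" and F: "F \<in> carrier_mat n n"
  shows "Aseq n k f F \<in> carrier_mat (n^Suc k) (n^Suc k)"
proof (induction k)
  case 0 then show ?case using f by simp
next
  case (Suc k)
  have "kron (Aseq n k f F) (1\<^sub>m n) \<in> carrier_mat (n^Suc k * n) (n^Suc k * n)"
    using Suc by (intro kron_carrierI) auto
  then have "kron (Aseq n k f F) (1\<^sub>m n) \<in> carrier_mat (n^Suc (Suc k)) (n^Suc (Suc k))"
    by (simp add: mult.commute)
  moreover have "op_sup n (Suc (Suc k)) (Suc k) F \<in> carrier_mat (n^Suc (Suc k)) (n^Suc (Suc k))"
    using F by (intro op_sup_carrier) auto
  ultimately show ?case by simp
qed

lemma Bseq_carrier:
  assumes f: "f \<in> carrier_mat n n" and F: "F \<in> carrier_mat n n" and H: "H \<in> carrier_mat n n"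
  shows "Bseq n m1 j f F H \<in> carrier_mat (n^Suc (m1 + j)) (n^Suc (m1 + j))"
proof (induction j)
  case 0 then show ?case using Aseq_carrier[OF f F] by simp
next
  case (Suc j)
  have "kron (Bseq n m1 j f F H) (1\<^sub>m n) \<in> carrier_mat (n^Suc (m1 + j) * n) (n^Suc (m1 + j) * n)"
    using Suc by (intro kron_carrierI) auto
  then have "kron (Bseq n m1 j f F H) (1\<^sub>m n) \<in> carrier_mat (n^Suc (Suc (m1 + j))) (n^Suc (Suc (m1 + j)))"
    by (simp add: mult.commute)
  moreover have "op_sup n (Suc (Suc (m1 + j))) (Suc (m1 + j)) H \<in> carrier_mat (n^Suc (Suc (m1 + j))) (n^Suc (Suc (m1 + j)))"
    using H by (intro op_sup_carrier) auto
  ultimately show ?case by simp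
qed

lemma tau_part:
  assumes f: "f \<in> carrier_mat n n" and F: "F \<in> carrier_mat n n" and H: "H \<in> carrier_mat n n"
    and Z: "mtrace (EM F t * EM H b) \<noteq> 0"
  shows "nderiv k (\<lambda>t. mtrace (f * Phi F H t b)) t = (-1)^k * mtrace (Aseq n k f F * tens_pow (Suc k) (Phi F H t b))"
proof (rule nderiv_eq[OF Z_open_tau[OF F H, of b], where Pk = "\<lambda>k t. (-1)^k * mtrace (Aseq n k f F * tens_pow (Suc k) (Phi F H t b))"])
  show "t \<in> {t. mtrace (EM F t * EM H b) \<noteq> 0}" using Z by simp
  fix t assume "t \<in> {t. mtrace (EM F t * EM H b) \<noteq> 0}"
  then show "mtrace (f * Phi F H t b) = (-1)^0 * mtrace (Aseq n 0 f F * tens_pow (Suc 0) (Phi F H t b))" by simp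
next
  fix k t assume "t \<in> {t. mtrace (EM F t * EM H b) \<noteq> 0}"
  then have Zt: "mtrace (EM F t * EM H b) \<noteq> 0" by simp
  have d: "((\<lambda>s. mtrace (Aseq n k f F * tens_pow (Suc k) (Phi F H s b))) has_vector_derivative
     - mtrace ((kron (Aseq n k f F) (1\<^sub>m n) * op_sup n (Suc (Suc k)) (Suc k) F) * tens_pow (Suc (Suc k)) (Phi F H t b))) (at t)"
    by (rule trace_dleft[where \<Phi>="\<lambda>s. Phi F H s b", OF F Aseq_carrier[OF f F] _ Phi_dtau[OF F H Zt] refl Phi_trace[OF F H Zt]]) simp
  show "((\<lambda>t. (-1)^k * mtrace (Aseq n k f F * tens_pow (Suc k) (Phi F H t b))) has_vector_derivative
      (-1)^Suc k * mtrace (Aseq n (Suc k) f F * tens_pow (Suc (Suc k)) (Phi F H t b))) (at t)"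
    using has_vector_derivative_mult_right[OF d, of "(-1)^k"] by simp
qed

lemma beta_part:
  assumes f: "f \<in> carrier_mat n n" and F: "F \<in> carrier_mat n n" and H: "H \<in> carrier_mat n n"
    and Z: "mtrace (EM F t * EM H b) \<noteq> 0"
  shows "nderiv j (\<lambda>b. nderiv m1 (\<lambda>t. mtrace (f * Phi F H t b)) t) b
    = (-1)^(m1 + j) * mtrace (Bseq n m1 j f F H * tens_pow (Suc (m1 + j)) (Phi F H t b))"
proof (rule nderiv_eq[OF Z_open_beta[OF F H, of t], where Pk = "\<lambda>j b. (-1)^(m1 + j) * mtrace (Bseq n m1 j f F H * tens_pow (Suc (m1 + j)) (Phi F H t b))"])
  show "b \<in> {b. mtrace (EM F t * EM H b) \<noteq> 0}" using Z by simp
  fix b assume "b \<in> {b. mtrace (EM F t * EM H b) \<noteq> 0}"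
  then have Zb: "mtrace (EM F t * EM H b) \<noteq> 0" by simp
  show "nderiv m1 (\<lambda>t. mtrace (f * Phi F H t b)) t = (-1)^(m1 + 0) * mtrace (Bseq n m1 0 f F H * tens_pow (Suc (m1 + 0)) (Phi F H t b))"
    using tau_part[OF f F H Zb, of m1] by simp
next
  fix j b assume "b \<in> {b. mtrace (EM F t * EM H b) \<noteq> 0}"
  then have Zb: "mtrace (EM F t * EM H b) \<noteq> 0" by simp
  have d: "((\<lambda>s. mtrace (Bseq n m1 j f F H * tens_pow (Suc (m1 + j)) (Phi F H t s))) has_vector_derivative
     - mtrace ((op_sup n (Suc (Suc (m1 + j))) (Suc (m1 + j)) H * kron (Bseq n m1 j f F H) (1\<^sub>m n)) * tens_pow (Suc (Suc (m1 + j))) (Phi F H t b))) (at b)"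
    by (rule trace_dright[where \<Phi>="\<lambda>s. Phi F H t s", OF H Bseq_carrier[OF f F H] _ Phi_dbeta[OF F H Zb] refl Phi_trace[OF F H Zb]]) simp
  show "((\<lambda>b. (-1)^(m1 + j) * mtrace (Bseq n m1 j f F H * tens_pow (Suc (m1 + j)) (Phi F H t b))) has_vector_derivative
      (-1)^(m1 + Suc j) * mtrace (Bseq n m1 (Suc j) f F H * tens_pow (Suc (m1 + Suc j)) (Phi F H t b))) (at b)"
    using has_vector_derivative_mult_right[OF d, of "(-1)^(m1 + j)"] by simp
qed


lemma mpl_carrier: "set xs \<subseteq> carrier_mat N N \<Longrightarrow> mat_prod_list N xs \<in> carrier_mat N N"
  unfolding mat_prod_list_def by (induction xs) auto

lemma mpl_shift:
  "set xs \<subseteq> carrier_mat N N \<Longrightarrow> B \<in> carrier_mat N N \<Longrightarrow> foldr (*) xs B = mat_prod_list N xs * B"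
proof (induction xs)
  case Nil then show ?case by (simp add: mat_prod_list_def)
next
  case (Cons x xs)
  then have "foldr (*) (x # xs) B = x * (mat_prod_list N xs * B)" by simp
  also have "\<dots> = (x * mat_prod_list N xs) * B"
    using Cons.prems by (subst assoc_mult_mat[of _ N N _ N _ N]) (auto intro: mpl_carrier)
  finally show ?case by (simp add: mat_prod_list_def)
qed

lemma mpl_append:
  "set xs \<subseteq> carrier_mat N N \<Longrightarrow> set ys \<subseteq> carrier_mat N N \<Longrightarrow>
   mat_prod_list N (xs @ ys) = mat_prod_list N xs * mat_prod_list N ys"
proof -
  assume a: "set xs \<subseteq> carrier_mat N N" "set ys \<subseteq> carrier_mat N N"
  have "mat_prod_list N (xs @ ys) = foldr (*) xs (mat_prod_list N ys)" by (simp add: mat_prod_list_def)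
  also have "\<dots> = mat_prod_list N xs * mat_prod_list N ys" by (rule mpl_shift[OF a(1) mpl_carrier[OF a(2)]])
  finally show ?thesis .
qed

lemma mpl_snoc:
  "set xs \<subseteq> carrier_mat N N \<Longrightarrow> y \<in> carrier_mat N N \<Longrightarrow>
   mat_prod_list N (xs @ [y]) = mat_prod_list N xs * y"
  using mpl_append[of xs N "[y]"] by (simp add: mat_prod_list_def)

lemma msum_comm:
  assumes "set xs \<subseteq> carrier_mat N N" "B \<in> carrier_mat N N" "\<forall>x\<in>set xs. x * B = B * x"
  shows "msum N xs * B = B * msum N xs"
  using assms(1,3)
proof (induction xs)
  case Nil then show ?case using assms(2) by (simp add: msum_def)
next
  case (Cons x xs)
  have cx: "x \<in> carrier_mat N N" and cs: "msum N xs \<in> carrier_mat N N" using Cons.prems msum_carrier by auto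
  have "msum N (x # xs) = x + msum N xs" by (simp add: msum_def)
  moreover have "(x + msum N xs) * B = x * B + msum N xs * B" by (rule add_mult_distrib_mat[OF cx cs assms(2)])
  moreover have "B * (x + msum N xs) = B * x + B * msum N xs" by (rule mult_add_distrib_mat[OF assms(2) cx cs])
  ultimately show ?case using Cons by simp
qed

lemma comm_lin:
  fixes A B C :: "complex mat" and c :: complex
  assumes A: "A \<in> carrier_mat N N" and C: "C \<in> carrier_mat N N" and B: "B \<in> carrier_mat N N"
    and "A * B = B * A" "C * B = B * C"
  shows "(A - c \<cdot>\<^sub>m C) * B = B * (A - c \<cdot>\<^sub>m C)"
proof -
  have "(A - c \<cdot>\<^sub>m C) * B = A * B - (c \<cdot>\<^sub>m C) * B" using A C B by (intro minus_mult_distrib_mat) auto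
  also have "(c \<cdot>\<^sub>m C) * B = c \<cdot>\<^sub>m (C * B)" by (rule mult_smult_assoc_mat[OF C B])
  also have "B * (A - c \<cdot>\<^sub>m C) = B * A - B * (c \<cdot>\<^sub>m C)" using A C B by (intro mult_minus_distrib_mat) auto
  moreover have "B * (c \<cdot>\<^sub>m C) = c \<cdot>\<^sub>m (B * C)" by (rule mult_smult_distrib[OF B C])
  ultimately show ?thesis using assms by simp
qed

lemma op_sup_eq:
  "1 \<le> s \<Longrightarrow> op_sup n q s X = msum (n^q) (map (\<lambda>r. op_on n q r X) [1..<Suc s]) - of_nat s \<cdot>\<^sub>m op_on n q (Suc s) X"
  by (simp add: op_sup_def msum_def)

lemma op_on_op_sup_comm:
  assumes H: "H \<in> carrier_mat n n" and r: "1 \<le> r" "r \<le> q" and s: "1 \<le> s" "s < q"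
  shows "op_sup n q s H * op_on n q r H = op_on n q r H * op_sup n q s H"
proof -
  have cs: "set (map (\<lambda>r. op_on n q r H) [1..<Suc s]) \<subseteq> carrier_mat (n^q) (n^q)"
    using H s by (auto intro!: op_on_carrier)
  have cr: "op_on n q r H \<in> carrier_mat (n^q) (n^q)" using H r by (intro op_on_carrier)
  have cS: "op_on n q (Suc s) H \<in> carrier_mat (n^q) (n^q)" using H s by (intro op_on_carrier) auto
  show ?thesis unfolding op_sup_eq[OF s(1)]
  proof (rule comm_lin[OF msum_carrier[OF cs] cS cr])
    show "msum (n^q) (map (\<lambda>r. op_on n q r H) [1..<Suc s]) * op_on n q r H = op_on n q r H * msum (n^q) (map (\<lambda>r. op_on n q r H) [1..<Suc s])"
      using H r s by (intro msum_comm[OF cs cr]) (auto intro!: op_on_comm)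
    show "op_on n q (Suc s) H * op_on n q r H = op_on n q r H * op_on n q (Suc s) H"
      using H r s by (intro op_on_comm) auto
  qed
qed

lemma op_sup_comm:
  assumes H: "H \<in> carrier_mat n n" and s: "1 \<le> s" "s < q" and s': "1 \<le> s'" "s' < q"
  shows "op_sup n q s H * op_sup n q s' H = op_sup n q s' H * op_sup n q s H"
proof -
  have cs: "set (map (\<lambda>r. op_on n q r H) [1..<Suc s]) \<subseteq> carrier_mat (n^q) (n^q)"
    using H s by (auto intro!: op_on_carrier)
  have cB: "op_sup n q s' H \<in> carrier_mat (n^q) (n^q)" using H s' by (intro op_sup_carrier)
  have cS: "op_on n q (Suc s) H \<in> carrier_mat (n^q) (n^q)" using H s by (intro op_on_carrier) auto
  show ?thesis unfolding op_sup_eq[OF s(1)]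
  proof (rule comm_lin[OF msum_carrier[OF cs] cS cB])
    show "msum (n^q) (map (\<lambda>r. op_on n q r H) [1..<Suc s]) * op_sup n q s' H = op_sup n q s' H * msum (n^q) (map (\<lambda>r. op_on n q r H) [1..<Suc s])"
      using H s s' by (intro msum_comm[OF cs cB]) (auto simp: op_on_op_sup_comm)
    show "op_on n q (Suc s) H * op_sup n q s' H = op_sup n q s' H * op_on n q (Suc s) H"
      using H s s' by (simp add: op_on_op_sup_comm)
  qed
qed

lemma comm_mpl:
  assumes h: "h \<in> carrier_mat N N" and ys: "set ys \<subseteq> carrier_mat N N" and c: "\<forall>y\<in>set ys. h * y = y * h"
  shows "h * mat_prod_list N ys = mat_prod_list N ys * h"
  using ys c
proof (induction ys)
  case Nil then show ?case using h by (simp add: mat_prod_list_def)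
next
  case (Cons y ys)
  have cy: "y \<in> carrier_mat N N" and cP: "mat_prod_list N ys \<in> carrier_mat N N" using Cons.prems mpl_carrier by auto
  have e: "mat_prod_list N (y # ys) = y * mat_prod_list N ys" by (simp add: mat_prod_list_def)
  have "h * (y * mat_prod_list N ys) = (h * y) * mat_prod_list N ys" using h cy cP by simp
  also have "\<dots> = (y * h) * mat_prod_list N ys" using Cons.prems by simp
  also have "\<dots> = y * (h * mat_prod_list N ys)" using h cy cP by simp
  also have "\<dots> = y * (mat_prod_list N ys * h)" using Cons by simp
  also have "\<dots> = (y * mat_prod_list N ys) * h" using h cy cP by simp
  finally show ?case unfolding e .
qed


lemma kron_mult_one:
  assumes "A \<in> carrier_mat a a" "B \<in> carrier_mat a a"
  shows "kron (A * B) (1\<^sub>m m) = kron A (1\<^sub>m m) * kron B (1\<^sub>m m)"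
  using kron_mult[OF assms(1) one_carrier_mat assms(2) one_carrier_mat, of m] by simp

lemma kron_lift_one: "kron (kron A (1\<^sub>m n)) (1\<^sub>m (n^j)) = kron A (1\<^sub>m (n^Suc j))"
  by (simp add: kron_assoc kron_one_one)

lemma Lprod:
  assumes f: "f \<in> carrier_mat n n" and F: "F \<in> carrier_mat n n" and k: "k < q"
  shows "mat_prod_list (n^q) (op_sup n q 0 f # map (\<lambda>s. op_sup n q s F) [1..<Suc k])
       = kron (Aseq n k f F) (1\<^sub>m (n^(q - Suc k)))"
  using k
proof (induction k)
  case 0
  have c: "op_sup n q 0 f \<in> carrier_mat (n^q) (n^q)" using f 0 by (intro op_sup_carrier)
  have "mat_prod_list (n^q) [op_sup n q 0 f] = op_sup n q 0 f"
    using right_mult_one_mat[OF c] by (simp add: mat_prod_list_def)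
  then show ?case by (simp add: op_sup_def op_on_def)
next
  case (Suc k)
  define j where "j = q - Suc (Suc k)"
  have qj: "q = Suc (Suc k) + j" "q - Suc k = Suc j" using Suc.prems unfolding j_def by auto
  have cpre: "set (op_sup n q 0 f # map (\<lambda>s. op_sup n q s F) [1..<Suc k]) \<subseteq> carrier_mat (n^q) (n^q)"
    using f F Suc.prems by (auto intro!: op_sup_carrier)
  have cOSq: "op_sup n q (Suc k) F \<in> carrier_mat (n^q) (n^q)" using F Suc.prems by (intro op_sup_carrier)
  have "mat_prod_list (n^q) (op_sup n q 0 f # map (\<lambda>s. op_sup n q s F) [1..<Suc (Suc k)])
      = mat_prod_list (n^q) ((op_sup n q 0 f # map (\<lambda>s. op_sup n q s F) [1..<Suc k]) @ [op_sup n q (Suc k) F])"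
    by simp
  also have "\<dots> = kron (Aseq n k f F) (1\<^sub>m (n^(q - Suc k))) * op_sup n q (Suc k) F"
    using mpl_snoc[OF cpre cOSq] Suc by simp
  also have "\<dots> = kron (Aseq n (Suc k) f F) (1\<^sub>m (n^(q - Suc (Suc k))))"
  proof -
    have cA1: "kron (Aseq n k f F) (1\<^sub>m n) \<in> carrier_mat (n^Suc (Suc k)) (n^Suc (Suc k))"
      using kron_carrierI[OF Aseq_carrier[OF f F, of k] one_carrier_mat[of n]] by (simp add: mult.commute)
    have cOS: "op_sup n (Suc (Suc k)) (Suc k) F \<in> carrier_mat (n^Suc (Suc k)) (n^Suc (Suc k))"
      using F by (intro op_sup_carrier) auto
    have "kron (Aseq n (Suc k) f F) (1\<^sub>m (n^j)) = kron (kron (Aseq n k f F) (1\<^sub>m n)) (1\<^sub>m (n^j)) * kron (op_sup n (Suc (Suc k)) (Suc k) F) (1\<^sub>m (n^j))"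
      by (simp only: Aseq.simps kron_mult_one[OF cA1 cOS])
    also have "\<dots> = kron (Aseq n k f F) (1\<^sub>m (n^(q - Suc k))) * op_sup n q (Suc k) F"
      unfolding kron_lift_one op_sup_lift[OF F, of "Suc k" "Suc (Suc k)" j, simplified] qj by simp
    finally show ?thesis unfolding j_def by simp
  qed
  finally show ?case .
qed

lemma Rprod:
  assumes f: "f \<in> carrier_mat n n" and F: "F \<in> carrier_mat n n" and H: "H \<in> carrier_mat n n" and j: "j \<le> m2"
  shows "kron (Bseq n m1 j f F H) (1\<^sub>m (n^(m2 - j)))
       = mat_prod_list (n^Suc (m1 + m2)) (map (\<lambda>s. op_sup n (Suc (m1 + m2)) s H) [Suc m1..<Suc (m1 + j)])
         * kron (Aseq n m1 f F) (1\<^sub>m (n^m2))"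
  using j
proof (induction j)
  case 0
  have c: "kron (Aseq n m1 f F) (1\<^sub>m (n^m2)) \<in> carrier_mat (n^Suc (m1 + m2)) (n^Suc (m1 + m2))"
    using kron_carrierI[OF Aseq_carrier[OF f F, of m1] one_carrier_mat[of "n^m2"]] by (simp add: power_add mult.assoc)
  show ?case using left_mult_one_mat[OF c] by (simp add: mat_prod_list_def)
next
  case (Suc j)
  define q where "q = Suc (m1 + m2)"
  define i where "i = m2 - Suc j"
  have qi: "q = Suc (Suc (m1 + j)) + i" "m2 - j = Suc i" using Suc.prems unfolding i_def q_def by auto
  define Rj where "Rj = mat_prod_list (n^q) (map (\<lambda>s. op_sup n q s H) [Suc m1..<Suc (m1 + j)])"
  define L where "L = kron (Aseq n m1 f F) (1\<^sub>m (n^m2))"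
  define h where "h = op_sup n q (Suc (m1 + j)) H"
  have cL: "L \<in> carrier_mat (n^q) (n^q)"
    using kron_carrierI[OF Aseq_carrier[OF f F, of m1] one_carrier_mat[of "n^m2"]] unfolding L_def q_def by (simp add: power_add mult.assoc)
  have ql: "Suc (m1 + j) < q" using Suc.prems unfolding q_def by auto
  have cRs: "set (map (\<lambda>s. op_sup n q s H) [Suc m1..<Suc (m1 + j)]) \<subseteq> carrier_mat (n^q) (n^q)"
    using H ql by (auto intro!: op_sup_carrier)
  have cRj: "Rj \<in> carrier_mat (n^q) (n^q)" unfolding Rj_def by (rule mpl_carrier[OF cRs])
  have ch: "h \<in> carrier_mat (n^q) (n^q)" unfolding h_def using H ql by (intro op_sup_carrier) auto
  have IH: "kron (Bseq n m1 j f F H) (1\<^sub>m (n^(m2 - j))) = Rj * L"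
    using Suc unfolding Rj_def L_def q_def by simp
  have cB1: "kron (Bseq n m1 j f F H) (1\<^sub>m n) \<in> carrier_mat (n^Suc (Suc (m1 + j))) (n^Suc (Suc (m1 + j)))"
    using kron_carrierI[OF Bseq_carrier[OF f F H, of m1 j] one_carrier_mat[of n]] by (simp add: mult.commute)
  have cOS: "op_sup n (Suc (Suc (m1 + j))) (Suc (m1 + j)) H \<in> carrier_mat (n^Suc (Suc (m1 + j))) (n^Suc (Suc (m1 + j)))"
    using H by (intro op_sup_carrier) auto
  have "kron (Bseq n m1 (Suc j) f F H) (1\<^sub>m (n^i))
      = kron (op_sup n (Suc (Suc (m1 + j))) (Suc (m1 + j)) H) (1\<^sub>m (n^i)) * kron (kron (Bseq n m1 j f F H) (1\<^sub>m n)) (1\<^sub>m (n^i))"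
    by (simp only: Bseq.simps kron_mult_one[OF cOS cB1])
  also have "\<dots> = h * kron (Bseq n m1 j f F H) (1\<^sub>m (n^(m2 - j)))"
    unfolding kron_lift_one op_sup_lift[OF H, of "Suc (m1 + j)" "Suc (Suc (m1 + j))" i, simplified] qi h_def by simp
  also have "\<dots> = h * (Rj * L)" unfolding IH ..
  also have "\<dots> = (h * Rj) * L" using ch cRj cL by simp
  also have "h * Rj = Rj * h"
    unfolding Rj_def
  proof (rule comm_mpl[OF ch cRs])
    show "\<forall>y\<in>set (map (\<lambda>s. op_sup n q s H) [Suc m1..<Suc (m1 + j)]). h * y = y * h"
      unfolding h_def using H ql by (auto intro!: op_sup_comm)
  qed
  also have "Rj * h = mat_prod_list (n^q) (map (\<lambda>s. op_sup n q s H) [Suc m1..<Suc (m1 + Suc j)])"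
    unfolding Rj_def h_def using mpl_snoc[OF cRs ch[unfolded h_def]] by simp
  finally show ?case unfolding i_def q_def L_def by simp
qed

lemma op_string_split:
  assumes f: "f \<in> carrier_mat n n" and F: "F \<in> carrier_mat n n" and H: "H \<in> carrier_mat n n"
    and mid: "set mid \<subseteq> carrier_mat (n^Suc (m1 + m2)) (n^Suc (m1 + m2))"
  shows "op_string n m1 m2 f F H mid =
     mat_prod_list (n^Suc (m1 + m2)) (op_sup n (Suc (m1 + m2)) 0 f # map (\<lambda>s. op_sup n (Suc (m1 + m2)) s F) [1..<Suc m1])
     * (mat_prod_list (n^Suc (m1 + m2)) mid
        * mat_prod_list (n^Suc (m1 + m2)) (map (\<lambda>s. op_sup n (Suc (m1 + m2)) s H) [Suc m1..<Suc (m1 + m2)]))"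
proof -
  define q where "q = Suc (m1 + m2)"
  have ql: "m1 < q" "m1 + m2 < q" unfolding q_def by auto
  have c1: "set (op_sup n q 0 f # map (\<lambda>s. op_sup n q s F) [1..<Suc m1]) \<subseteq> carrier_mat (n^q) (n^q)"
    using f F ql by (auto intro!: op_sup_carrier)
  have c2: "set (map (\<lambda>s. op_sup n q s H) [Suc m1..<Suc (m1 + m2)]) \<subseteq> carrier_mat (n^q) (n^q)"
    using H ql by (auto intro!: op_sup_carrier)
  have "op_string n m1 m2 f F H mid = mat_prod_list (n^q) ((op_sup n q 0 f # map (\<lambda>s. op_sup n q s F) [1..<Suc m1])
        @ (mid @ map (\<lambda>s. op_sup n q s H) [Suc m1..<Suc (m1 + m2)]))"
    unfolding op_string_def q_def by simp
  also have "\<dots> = mat_prod_list (n^q) (op_sup n q 0 f # map (\<lambda>s. op_sup n q s F) [1..<Suc m1])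
       * (mat_prod_list (n^q) mid * mat_prod_list (n^q) (map (\<lambda>s. op_sup n q s H) [Suc m1..<Suc (m1 + m2)]))"
  proof -
    have mid': "set mid \<subseteq> carrier_mat (n^q) (n^q)" using mid unfolding q_def .
    have c3: "set (mid @ map (\<lambda>s. op_sup n q s H) [Suc m1..<Suc (m1 + m2)]) \<subseteq> carrier_mat (n^q) (n^q)"
      using mid' c2 by auto
    show ?thesis by (simp only: mpl_append[OF c1 c3] mpl_append[OF mid' c2])
  qed
  finally show ?thesis unfolding q_def .
qed


lemma main_first:
  assumes f: "f \<in> carrier_mat n n" and F: "F \<in> carrier_mat n n" and H: "H \<in> carrier_mat n n"
    and Z: "mtrace (EM F \<tau> * EM H \<beta>) \<noteq> 0"
  shows "nderiv m2 (\<lambda>b. nderiv m1 (\<lambda>t. mtrace (f * Phi F H t b)) \<tau>) \<beta>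
     = (-1) ^ (m1 + m2) * mtrace (op_string n m1 m2 f F H [tens_pow (m1 + m2 + 1) (Phi F H \<tau> \<beta>)])"
proof -
  define q where "q = Suc (m1 + m2)"
  define T where "T = tens_pow q (Phi F H \<tau> \<beta>)"
  define L where "L = mat_prod_list (n^q) (op_sup n q 0 f # map (\<lambda>s. op_sup n q s F) [1..<Suc m1])"
  define R where "R = mat_prod_list (n^q) (map (\<lambda>s. op_sup n q s H) [Suc m1..<Suc (m1 + m2)])"
  have cT: "T \<in> carrier_mat (n^q) (n^q)" unfolding T_def by (rule tens_pow_carrier[OF Phi_carrier[OF F H]])
  have ql: "m1 < q" "m1 + m2 < q" unfolding q_def by auto
  have cL: "L \<in> carrier_mat (n^q) (n^q)" unfolding L_def using f F ql by (intro mpl_carrier) (auto intro!: op_sup_carrier)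
  have cR: "R \<in> carrier_mat (n^q) (n^q)" unfolding R_def using H ql by (intro mpl_carrier) (auto intro!: op_sup_carrier)
  have LA: "L = kron (Aseq n m1 f F) (1\<^sub>m (n^m2))"
    unfolding L_def using Lprod[OF f F ql(1)] by (simp add: q_def)
  have BRL: "Bseq n m1 m2 f F H = R * L"
    using Rprod[OF f F H, of m2 m2 m1] unfolding LA R_def q_def by simp
  have "nderiv m2 (\<lambda>b. nderiv m1 (\<lambda>t. mtrace (f * Phi F H t b)) \<tau>) \<beta>
      = (-1) ^ (m1 + m2) * mtrace (Bseq n m1 m2 f F H * T)"
    unfolding T_def q_def using beta_part[OF f F H Z, of m2 m1] by simp
  also have "mtrace (Bseq n m1 m2 f F H * T) = mtrace (L * (T * R))"
  proof -
    have "mtrace (L * (T * R)) = mtrace ((T * R) * L)" using cL cT cR by (intro mtrace_mult_comm) auto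
    also have "(T * R) * L = T * (R * L)" using cL cT cR by simp
    also have "mtrace (T * (R * L)) = mtrace ((R * L) * T)" using cL cT cR by (intro mtrace_mult_comm) auto
    finally show ?thesis unfolding BRL by simp
  qed
  also have "L * (T * R) = op_string n m1 m2 f F H [T]"
  proof -
    have "op_string n m1 m2 f F H [T] = L * (mat_prod_list (n^q) [T] * R)"
      unfolding L_def R_def q_def by (rule op_string_split[OF f F H]) (use cT in \<open>simp add: q_def\<close>)
    moreover have "mat_prod_list (n^q) [T] = T" using cT by (simp add: mat_prod_list_def)
    ultimately show ?thesis by simp
  qed
  finally show ?thesis unfolding T_def q_def by simp
qed

lemma EM_zero:
  assumes A: "A \<in> carrier_mat n n"
  shows "EM A 0 = 1\<^sub>m n"
proof (rule eq_matI)
  fix i j assume "i < dim_row (1\<^sub>m n :: complex mat)" "j < dim_col (1\<^sub>m n :: complex mat)"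
  then have ij: "i < n" "j < n" by auto
  have "EM A 0 $$ (i,j) = ser A i j 0" unfolding EM_def using mexp_entry[OF A ij, of 0] by simp
  also have "\<dots> = (A ^\<^sub>m 0) $$ (i,j) / of_nat (fact 0)" unfolding ser_def by (rule powser_zero)
  finally show "EM A 0 $$ (i,j) = 1\<^sub>m n $$ (i,j)" using A ij by simp
qed (use A in \<open>auto simp: EM_def\<close>)

lemma tens_pow_scalar_one: "tens_pow q (c \<cdot>\<^sub>m 1\<^sub>m n) = c^q \<cdot>\<^sub>m 1\<^sub>m (n^q)"
proof (induction q)
  case 0 then show ?case by (rule eq_matI) auto
next
  case (Suc q)
  have "tens_pow (Suc q) (c \<cdot>\<^sub>m 1\<^sub>m n) = c^q \<cdot>\<^sub>m (c \<cdot>\<^sub>m kron (1\<^sub>m n) (1\<^sub>m (n^q)))"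
    using Suc by (simp add: kron_smult_left kron_smult_right)
  also have "\<dots> = c^Suc q \<cdot>\<^sub>m 1\<^sub>m (n^Suc q)"
    unfolding kron_one_one by (rule eq_matI) auto
  finally show ?case .
qed


lemma op_string_scalar:
  assumes f: "f \<in> carrier_mat n n" and F: "F \<in> carrier_mat n n" and H: "H \<in> carrier_mat n n"
  shows "op_string n m1 m2 f F H [c \<cdot>\<^sub>m 1\<^sub>m (n^Suc (m1 + m2))] = c \<cdot>\<^sub>m op_string n m1 m2 f F H []"
    and "op_string n m1 m2 f F H [] \<in> carrier_mat (n^Suc (m1 + m2)) (n^Suc (m1 + m2))"
proof -
  define q where "q = Suc (m1 + m2)"
  define L where "L = mat_prod_list (n^q) (op_sup n q 0 f # map (\<lambda>s. op_sup n q s F) [1..<Suc m1])"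
  define R where "R = mat_prod_list (n^q) (map (\<lambda>s. op_sup n q s H) [Suc m1..<Suc (m1 + m2)])"
  have ql: "m1 < q" "m1 + m2 < q" unfolding q_def by auto
  have cL: "L \<in> carrier_mat (n^q) (n^q)" unfolding L_def using f F ql by (intro mpl_carrier) (auto intro!: op_sup_carrier)
  have cR: "R \<in> carrier_mat (n^q) (n^q)" unfolding R_def using H ql by (intro mpl_carrier) (auto intro!: op_sup_carrier)
  have e1: "op_string n m1 m2 f F H [c \<cdot>\<^sub>m 1\<^sub>m (n^q)] = L * (mat_prod_list (n^q) [c \<cdot>\<^sub>m 1\<^sub>m (n^q)] * R)"
    unfolding L_def R_def q_def by (rule op_string_split[OF f F H]) simp
  have e2: "op_string n m1 m2 f F H [] = L * (mat_prod_list (n^q) [] * R)"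
    unfolding L_def R_def q_def by (rule op_string_split[OF f F H]) simp
  have m1: "mat_prod_list (n^q) [c \<cdot>\<^sub>m 1\<^sub>m (n^q)] = c \<cdot>\<^sub>m 1\<^sub>m (n^q)"
    by (simp add: mat_prod_list_def)
  have m0: "mat_prod_list (n^q) [] = 1\<^sub>m (n^q)" by (simp add: mat_prod_list_def)
  have "(c \<cdot>\<^sub>m 1\<^sub>m (n^q)) * R = c \<cdot>\<^sub>m R"
    using mult_smult_assoc_mat[OF one_carrier_mat cR] cR by simp
  moreover have "L * (c \<cdot>\<^sub>m R) = c \<cdot>\<^sub>m (L * R)" by (rule mult_smult_distrib[OF cL cR])
  moreover have "1\<^sub>m (n^q) * R = R" using cR by simp
  ultimately show "op_string n m1 m2 f F H [c \<cdot>\<^sub>m 1\<^sub>m (n^Suc (m1 + m2))] = c \<cdot>\<^sub>m op_string n m1 m2 f F H []"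
    unfolding q_def[symmetric] e1 e2 m1 m0 by simp
  show "op_string n m1 m2 f F H [] \<in> carrier_mat (n^Suc (m1 + m2)) (n^Suc (m1 + m2))"
    unfolding q_def[symmetric] e2 m0 using cL cR by simp
qed

theorem lemma2:
  fixes n m1 m2 :: nat and f F H :: "complex mat" and \<tau> \<beta> :: real
  assumes "f \<in> carrier_mat n n" and "F \<in> carrier_mat n n" and "H \<in> carrier_mat n n"
    and "mtrace (mexp ((- complex_of_real \<tau>) \<cdot>\<^sub>m F) * mexp ((- complex_of_real \<beta>) \<cdot>\<^sub>m H)) \<noteq> 0"
  shows "(nderiv m2 (\<lambda>b. nderiv m1 (\<lambda>t. mtrace (f * Phi F H t b)) \<tau>) \<beta>
           = (-1) ^ (m1 + m2) *
             mtrace (op_string n m1 m2 f F H [tens_pow (m1 + m2 + 1) (Phi F H \<tau> \<beta>)]))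
    \<and> (nderiv m2 (\<lambda>b. nderiv m1 (\<lambda>t. mtrace (f * Phi F H t b)) 0) 0
           = (-1) ^ (m1 + m2) * ntr n (m1 + m2 + 1) (op_string n m1 m2 f F H []))"
proof
  note f = assms(1) and F = assms(2) and H = assms(3)
  have Z: "mtrace (EM F \<tau> * EM H \<beta>) \<noteq> 0" using assms(4) unfolding EM_def .
  show "nderiv m2 (\<lambda>b. nderiv m1 (\<lambda>t. mtrace (f * Phi F H t b)) \<tau>) \<beta>
           = (-1) ^ (m1 + m2) * mtrace (op_string n m1 m2 f F H [tens_pow (m1 + m2 + 1) (Phi F H \<tau> \<beta>)])"
    by (rule main_first[OF f F H Z])
  have n0: "n \<noteq> 0"
  proof
    assume n: "n = 0"
    have "dim_row (EM F \<tau>) = 0" using carrier_matD(1)[OF EM_carrier[OF F, of \<tau>]] n by simp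
    then have "mtrace (EM F \<tau> * EM H \<beta>) = 0" by (simp add: mtrace_def)
    with Z show False by simp
  qed
  have M0: "EM F 0 * EM H 0 = 1\<^sub>m n" using EM_zero[OF F] EM_zero[OF H] by simp
  have Z0: "mtrace (EM F 0 * EM H 0) \<noteq> 0" unfolding M0 mtrace_one using n0 by simp
  have P0: "Phi F H 0 0 = (1 / of_nat n) \<cdot>\<^sub>m 1\<^sub>m n" unfolding Phi_eq M0 mtrace_one ..
  define q where "q = Suc (m1 + m2)"
  have "nderiv m2 (\<lambda>b. nderiv m1 (\<lambda>t. mtrace (f * Phi F H t b)) 0) 0
       = (-1) ^ (m1 + m2) * mtrace (op_string n m1 m2 f F H [tens_pow (m1 + m2 + 1) (Phi F H 0 0)])"
    by (rule main_first[OF f F H Z0])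
  also have "tens_pow (m1 + m2 + 1) (Phi F H 0 0) = (1 / of_nat n)^q \<cdot>\<^sub>m 1\<^sub>m (n^q)"
    unfolding P0 tens_pow_scalar_one q_def by simp
  also have "op_string n m1 m2 f F H [(1 / of_nat n)^q \<cdot>\<^sub>m 1\<^sub>m (n^q)] = (1 / of_nat n)^q \<cdot>\<^sub>m op_string n m1 m2 f F H []"
    unfolding q_def by (rule op_string_scalar(1)[OF f F H])
  also have "mtrace ((1 / of_nat n)^q \<cdot>\<^sub>m op_string n m1 m2 f F H []) = (1 / of_nat n)^q * mtrace (op_string n m1 m2 f F H [])"
    using op_string_scalar(2)[OF f F H, of m1 m2] unfolding q_def by (rule mtrace_smult)
  also have "(1 / of_nat n)^q * mtrace (op_string n m1 m2 f F H []) = ntr n (m1 + m2 + 1) (op_string n m1 m2 f F H [])"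
    unfolding ntr_def mtrace_one q_def by (simp add: field_simps)
  finally show "nderiv m2 (\<lambda>b. nderiv m1 (\<lambda>t. mtrace (f * Phi F H t b)) 0) 0
           = (-1) ^ (m1 + m2) * ntr n (m1 + m2 + 1) (op_string n m1 m2 f F H [])" .
qed


end
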